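(* For all $i\neq j$ and $k\in\{-1,1\}$, $R_{i,j}^{(k)}(1)<1$.
   Context: Fix an integer $N\ge 3$. Let $\mathcal G_N$ be the groupoid with object set $\{1,\dots,N\}$ generated by arrows $A_{i,j}^{(k)}$, $i\neq j\in\{1,\dots,N\}$, $k\in\{-1,1\}$, with source $i$ and target $j$, subject to the relations $A_{i,j}^{(k)}A_{j,\ell}^{(k)}=A_{i,\ell}^{(k)}$ for all $i,j,\ell$, $k$, with the convention $A_{i,i}^{(k)}:=e_i$ (unit at object $i$). Let $\mathcal A$ be its arrow set. Let $\{W_n\}_{n\ge0}$ be the Markov chain on $\mathcal A$ with $P(W_{n+1}=y\mid W_n=x)=p_{i,j}^{(k)}$ if $x^{-1}y=A_{i,j}^{(k)}$ with $i\ne j$ and $0$ otherwise, where $p_{i,j}^{(k)}\in(0,1)$ and $\sum_{j\ne i}\sum_{k=\pm1}p_{i,j}^{(k)}=1$ for each $i$; $P_x,E_x$ denote law and expectation with $W_0=x$. For $x\in\mathcal A$ let $T(0,x)=\inf\{n\ge0:W_n=W_0x\}$ (possibly $\infty$), and define $R_{i,j}^{(k)}(\lambda)=E_{e_i}[\lambda^{T(0,A_{i,j}^{(k)})}]=\sum_{n\ge0}P_{e_i}(T(0,A_{i,j}^{(k)})=n)\lambda^n$. *)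

theory Defs
  imports Complex_Main
begin

text \<open>Generators A_{c,j}^{(k)} leaving the current object c are encoded as pairs (k, j).
An arrow of the groupoid with source i is represented by a word (list of generators)
forming a composable path starting at i; two words are identified modulo the
congruence generated by the defining relations A^{(k)}_{a,b} A^{(k)}_{b,l} = A^{(k)}_{a,l}
(with A^{(k)}_{a,a} = e_a).\<close>

type_synonym gen = "int \<times> nat"

fun valid_word :: "nat \<Rightarrow> nat \<Rightarrow> gen list \<Rightarrow> bool" where
  "valid_word N c [] = True"
| "valid_word N c ((k, j) # gs) =
     (k \<in> {-1, 1} \<and> j \<in> {1..N} \<and> j \<noteq> c \<and> valid_word N j gs)"

definition tgt :: "nat \<Rightarrow> gen list \<Rightarrow> nat" where
  "tgt i gs = (if gs = [] then i else snd (last gs))"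

definition red_rel :: "nat \<Rightarrow> nat \<Rightarrow> (gen list \<times> gen list) set" where
  "red_rel N i =
     {(xs @ [(k, a), (k, b)] @ ys,
       if b = tgt i xs then xs @ ys else xs @ [(k, b)] @ ys) | xs k a b ys.
        valid_word N i (xs @ [(k, a), (k, b)] @ ys)}"

definition word_eq :: "nat \<Rightarrow> nat \<Rightarrow> gen list \<Rightarrow> gen list \<Rightarrow> bool" where
  "word_eq N i u v \<longleftrightarrow> (u, v) \<in> (red_rel N i \<union> (red_rel N i)\<inverse>)\<^sup>*"

fun path_prob :: "(nat \<Rightarrow> nat \<Rightarrow> int \<Rightarrow> real) \<Rightarrow> nat \<Rightarrow> gen list \<Rightarrow> real" where
  "path_prob p c [] = 1"
| "path_prob p c ((k, j) # gs) = p c j k * path_prob p j gs"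

text \<open>The event T(0,x) = n for the walk started at e_i, with x represented by the word w:
the increment word of length n equals x and no shorter prefix does.\<close>
definition first_hit_paths :: "nat \<Rightarrow> nat \<Rightarrow> gen list \<Rightarrow> nat \<Rightarrow> gen list set" where
  "first_hit_paths N i w n =
     {gs. length gs = n \<and> valid_word N i gs \<and> word_eq N i gs w \<and>
          (\<forall>m<n. \<not> word_eq N i (take m gs) w)}"

definition hit_prob :: "(nat \<Rightarrow> nat \<Rightarrow> int \<Rightarrow> real) \<Rightarrow> nat \<Rightarrow> nat \<Rightarrow> gen list \<Rightarrow> nat \<Rightarrow> real" where
  "hit_prob p N i w n = (\<Sum>gs\<in>first_hit_paths N i w n. path_prob p i gs)"

definition R_gen :: "(nat \<Rightarrow> nat \<Rightarrow> int \<Rightarrow> real) \<Rightarrow> nat \<Rightarrow> nat \<Rightarrow> nat \<Rightarrow> int \<Rightarrow> real \<Rightarrow> real" where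
  "R_gen p N i j k lam = (\<Sum>n. hit_prob p N i [(k, j)] n * lam ^ n)"

end

theory Submission
  imports Defs "Jordan_Normal_Form.Determinant"
begin

fun tgtS :: "nat \<Rightarrow> gen list \<Rightarrow> nat" where
  "tgtS r [] = r"
| "tgtS r (g # _) = snd g"

fun pushS :: "nat \<Rightarrow> gen list \<Rightarrow> gen \<Rightarrow> gen list" where
  "pushS r [] a = [a]"
| "pushS r ((t', c) # rest) (t, a) =
     (if t' = t then (if a = tgtS r rest then rest else (t, a) # rest)
      else (t, a) # (t', c) # rest)"

fun redS :: "nat \<Rightarrow> nat \<Rightarrow> gen list \<Rightarrow> bool" where
  "redS N r [] = True"
| "redS N r ((t, c) # rest) =
     (t \<in> {-1, 1} \<and> c \<in> {1..N} \<and> c \<noteq> tgtS r rest \<and> redS N r rest \<and>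
      (case rest of [] \<Rightarrow> True | g # _ \<Rightarrow> fst g \<noteq> t))"

lemma tgt_push[simp]: "tgtS r (pushS r s (t, a)) = a"
  by (cases "(r, s, (t, a))" rule: pushS.cases) auto

lemma red_push:
  assumes "redS N r s" "t \<in> {-1, 1}" "a \<in> {1..N}" "a \<noteq> tgtS r s"
  shows "redS N r (pushS r s (t, a))"
  using assms
proof (cases "(r, s, (t, a))" rule: pushS.cases)
  case (2 r t' c rest t a)
  then show ?thesis using assms by (auto split: list.splits)
qed auto

lemma push_push:
  assumes "redS N r s" "a \<noteq> tgtS r s" "b \<noteq> a"
  shows "pushS r (pushS r s (t, a)) (t, b) = (if b = tgtS r s then s else pushS r s (t, b))"
  using assms
proof (cases "(r, s, (t, a))" rule: pushS.cases)
  case (2 r t' c rest t a)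
  then show ?thesis using assms
    by (cases rest) (auto split: if_splits)
qed auto

lemma tgt_Cons: "tgt c (g # xs) = tgt (snd g) xs"
  by (cases g) (simp add: tgt_def)

lemma tgt_snoc: "tgt c (xs @ [g]) = snd g"
  by (simp add: tgt_def)

lemma valid_append:
  "valid_word N c (xs @ ys) = (valid_word N c xs \<and> valid_word N (tgt c xs) ys)"
  by (induction xs arbitrary: c) (auto simp: tgt_Cons tgt_def)

lemma tgt_fold:
  "tgtS r s0 = i \<Longrightarrow> tgtS r (foldl (pushS r) s0 gs) = tgt i gs"
proof (induction gs rule: rev_induct)
  case Nil then show ?case by (simp add: tgt_def)
next
  case (snoc g gs)
  then show ?case by (cases g) (simp add: tgt_snoc)
qed

lemma red_fold:
  "redS N r s0 \<Longrightarrow> tgtS r s0 = i \<Longrightarrow> valid_word N i gs \<Longrightarrow> redS N r (foldl (pushS r) s0 gs)"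
proof (induction gs rule: rev_induct)
  case Nil then show ?case by simp
next
  case (snoc g gs)
  obtain t a where g: "g = (t, a)" by (cases g)
  have v: "valid_word N i gs" "t \<in> {-1,1}" "a \<in> {1..N}" "a \<noteq> tgt i gs"
    using snoc.prems(3) by (auto simp: valid_append g)
  have "redS N r (foldl (pushS r) s0 gs)" using snoc v by blast
  moreover have "a \<noteq> tgtS r (foldl (pushS r) s0 gs)" using tgt_fold[OF snoc.prems(2)] v by simp
  ultimately show ?case using red_push v by (simp add: g)
qed

lemma fold_red_rel:
  assumes "redS N r s0" "tgtS r s0 = i" "(u, v) \<in> red_rel N i"
  shows "foldl (pushS r) s0 u = foldl (pushS r) s0 v"
proof -
  from assms(3) obtain xs k a b ys where
    u: "u = xs @ [(k, a), (k, b)] @ ys" and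
    v: "v = (if b = tgt i xs then xs @ ys else xs @ [(k, b)] @ ys)" and
    val: "valid_word N i (xs @ [(k, a), (k, b)] @ ys)"
    unfolding red_rel_def by blast
  let ?s = "foldl (pushS r) s0 xs"
  have vx: "valid_word N i xs" and ab: "a \<noteq> tgt i xs" "b \<noteq> a"
    using val by (auto simp: valid_append tgt_Cons)
  have rs: "redS N r ?s" using red_fold[OF assms(1,2) vx] .
  have ts: "tgtS r ?s = tgt i xs" using tgt_fold[OF assms(2)] .
  have pp: "pushS r (pushS r ?s (k, a)) (k, b) = (if b = tgt i xs then ?s else pushS r ?s (k, b))"
    using push_push[OF rs, of a b k] ab ts by simp
  show ?thesis
    using pp by (simp add: u v)
qed

lemma word_eq_fold:
  assumes "redS N r s0" "tgtS r s0 = i" "word_eq N i u v"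
  shows "foldl (pushS r) s0 u = foldl (pushS r) s0 v"
proof -
  have "(u, v) \<in> (red_rel N i \<union> (red_rel N i)\<inverse>)\<^sup>*" using assms(3) by (simp add: word_eq_def)
  then show ?thesis
  proof (induction rule: rtrancl_induct)
    case base then show ?case by simp
  next
    case (step y z)
    then show ?case using fold_red_rel[OF assms(1,2)] by auto
  qed
qed

definition pfree :: "gen list set \<Rightarrow> bool" where
  "pfree B \<longleftrightarrow> (\<forall>g z. g \<in> B \<longrightarrow> g @ z \<in> B \<longrightarrow> z = [])"

lemma valid_set: "valid_word N c g \<Longrightarrow> set g \<subseteq> {-1,1} \<times> {1..N}"
proof (induction g arbitrary: c)
  case (Cons a g)
  obtain k j where a: "a = (k, j)" by (cases a)
  show ?case using Cons.prems Cons.IH[of j] by (auto simp: a)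
qed simp

lemma finite_valid: "finite {g. valid_word N c g \<and> length g < M}"
proof -
  have "{g. valid_word N c g \<and> length g < M} \<subseteq> {g. set g \<subseteq> {-1,1} \<times> {1..N} \<and> length g \<le> M}"
    using valid_set by fastforce
  moreover have "finite {g. set g \<subseteq> ({-1,1::int} \<times> {1..N}) \<and> length g \<le> M}"
    by (rule finite_lists_length_le) auto
  ultimately show ?thesis by (rule finite_subset)
qed

lemma split_first:
  assumes "finite B" "[] \<notin> B" "\<forall>g\<in>B. hd g \<in> A" "finite A"
  shows "sum f B = (\<Sum>a\<in>A. \<Sum>g\<in>{g. a # g \<in> B}. f (a # g))"
proof -
  have "sum f B = (\<Sum>a\<in>A. sum f {g \<in> B. hd g = a})"
  proof -
    have "hd ` B \<subseteq> A" using assms(3) by auto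
    from sum.group[OF assms(1) assms(4) this, of f] show ?thesis by simp
  qed
  also have "\<dots> = (\<Sum>a\<in>A. \<Sum>g\<in>{g. a # g \<in> B}. f (a # g))"
  proof (rule sum.cong[OF refl])
    fix a assume "a \<in> A"
    have e: "{g \<in> B. hd g = a} = (\<lambda>g. a # g) ` {g. a # g \<in> B}"
    proof
      show "{g \<in> B. hd g = a} \<subseteq> (\<lambda>g. a # g) ` {g. a # g \<in> B}"
      proof
        fix g assume "g \<in> {g \<in> B. hd g = a}"
        then have "g \<in> B" "hd g = a" by auto
        moreover then have "g \<noteq> []" using assms(2) by auto
        ultimately show "g \<in> (\<lambda>g. a # g) ` {g. a # g \<in> B}"
          by (metis (mono_tags, lifting) image_eqI list.collapse mem_Collect_eq)
      qed
    qed auto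
    show "sum f {g \<in> B. hd g = a} = (\<Sum>g\<in>{g. a # g \<in> B}. f (a # g))"
      unfolding e by (subst sum.reindex) (auto simp: inj_on_def)
  qed
  finally show ?thesis .
qed

locale walk =
  fixes N :: nat and p :: "nat \<Rightarrow> nat \<Rightarrow> int \<Rightarrow> real"
  assumes N3: "N \<ge> 3"
    and p_pos: "\<And>i j k. i \<in> {1..N} \<Longrightarrow> j \<in> {1..N} \<Longrightarrow> i \<noteq> j \<Longrightarrow> k \<in> {-1, 1} \<Longrightarrow>
                  0 < p i j k \<and> p i j k < 1"
    and p_sum: "\<And>i. i \<in> {1..N} \<Longrightarrow> (\<Sum>j\<in>{1..N} - {i}. \<Sum>k\<in>{-1, 1}. p i j k) = 1"
begin

lemma sum_pairs:
  "(\<Sum>a\<in>{-1,1::int} \<times> ({1..N} - {c}). f (fst a) (snd a)) = (\<Sum>j\<in>{1..N} - {c}. \<Sum>k\<in>{-1, 1}. f k j)"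
proof -
  have "(\<Sum>a\<in>{-1,1::int} \<times> ({1..N} - {c}). f (fst a) (snd a)) = (\<Sum>k\<in>{-1,1::int}. \<Sum>j\<in>{1..N} - {c}. f k j)"
    by (simp add: sum.cartesian_product split_def)
  also have "\<dots> = (\<Sum>j\<in>{1..N} - {c}. \<Sum>k\<in>{-1, 1}. f k j)"
    by (rule sum.swap)
  finally show ?thesis .
qed

lemma pp_nonneg: "c \<in> {1..N} \<Longrightarrow> valid_word N c g \<Longrightarrow> 0 \<le> path_prob p c g"
proof (induction g arbitrary: c)
  case (Cons a g)
  obtain k j where a: "a = (k, j)" by (cases a)
  show ?case using Cons p_pos[of c j k] by (auto simp: a)
qed simp

lemma pf_le1:
  "c \<in> {1..N} \<Longrightarrow> (\<forall>g\<in>B. valid_word N c g \<and> length g < M) \<Longrightarrow> pfree B \<Longrightarrow>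
   sum (path_prob p c) B \<le> 1"
proof (induction M arbitrary: c B)
  case 0 then show ?case by (cases "B = {}") auto
next
  case (Suc M)
  have finB: "finite B"
    by (rule finite_subset[OF _ finite_valid[of N c "Suc M"]]) (use Suc.prems in auto)
  show ?case
  proof (cases "[] \<in> B")
    case True
    then have "B = {[]}" using Suc.prems(3) unfolding pfree_def by force
    then show ?thesis by simp
  next
    case False
    let ?A = "{-1,1::int} \<times> ({1..N} - {c})"
    have hd: "\<forall>g\<in>B. hd g \<in> ?A"
    proof
      fix g assume "g \<in> B"
      then have "g \<noteq> []" "valid_word N c g" using False Suc.prems by auto
      then show "hd g \<in> ?A" by (cases g) auto
    qed
    have "sum (path_prob p c) B = (\<Sum>a\<in>?A. \<Sum>g\<in>{g. a # g \<in> B}. path_prob p c (a # g))"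
      by (rule split_first[OF finB False hd]) auto
    also have "\<dots> = (\<Sum>a\<in>?A. p c (snd a) (fst a) * (\<Sum>g\<in>{g. a # g \<in> B}. path_prob p (snd a) g))"
      by (rule sum.cong[OF refl]) (auto simp: sum_distrib_left)
    also have "\<dots> \<le> (\<Sum>a\<in>?A. p c (snd a) (fst a) * 1)"
    proof (rule sum_mono)
      fix a assume a: "a \<in> ?A"
      obtain t b where ab: "a = (t, b)" by (cases a)
      have pa: "0 \<le> p c (snd a) (fst a)" using p_pos[of c b t] a ab Suc.prems(1) by auto
      have "(\<Sum>g\<in>{g. a # g \<in> B}. path_prob p (snd a) g) \<le> 1"
      proof (rule Suc.IH)
        show "snd a \<in> {1..N}" using a by auto
        show "\<forall>g\<in>{g. a # g \<in> B}. valid_word N (snd a) g \<and> length g < M"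
          using Suc.prems(2) by (cases a) auto
        show "pfree {g. a # g \<in> B}" using Suc.prems(3) unfolding pfree_def by auto
      qed
      then show "p c (snd a) (fst a) * (\<Sum>g\<in>{g. a # g \<in> B}. path_prob p (snd a) g) \<le> p c (snd a) (fst a) * 1"
        using pa mult_left_mono by fastforce
    qed
    also have "\<dots> = 1" using sum_pairs[where c=c and f="\<lambda>k j. p c j k"] p_sum[OF Suc.prems(1)] by simp
    finally show ?thesis .
  qed
qed

lemma hit_bound:
  fixes H :: "gen list \<Rightarrow> real" and r :: nat
  assumes H0: "\<And>s. redS N r s \<Longrightarrow> 0 \<le> H s" and H1: "H [] = 1"
    and Hs: "\<And>s. redS N r s \<Longrightarrow> s \<noteq> [] \<Longrightarrow>
       (\<Sum>a\<in>{-1,1} \<times> ({1..N} - {tgtS r s}). p (tgtS r s) (snd a) (fst a) * H (pushS r s a)) \<le> H s"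
    and r: "r \<in> {1..N}"
  shows "redS N r s \<Longrightarrow> (\<forall>g\<in>B. valid_word N (tgtS r s) g \<and> length g < M \<and> foldl (pushS r) s g = []) \<Longrightarrow>
     pfree B \<Longrightarrow> sum (path_prob p (tgtS r s)) B \<le> H s"
proof (induction M arbitrary: s B)
  case 0 then show ?case using H0 by (cases "B = {}") auto
next
  case (Suc M)
  let ?c = "tgtS r s"
  have cS: "?c \<in> {1..N}" using Suc.prems(1) r by (cases s) auto
  have finB: "finite B"
    by (rule finite_subset[OF _ finite_valid[of N ?c "Suc M"]]) (use Suc.prems in auto)
  show ?case
  proof (cases "s = []")
    case True
    then show ?thesis using pf_le1[of ?c B "Suc M"] Suc.prems cS H1 by auto
  next
    case sne: False
    have False: "[] \<notin> B" using Suc.prems(2) sne by auto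
    let ?A = "{-1,1::int} \<times> ({1..N} - {?c})"
    have hd: "\<forall>g\<in>B. hd g \<in> ?A"
    proof
      fix g assume "g \<in> B"
      then have "g \<noteq> []" "valid_word N ?c g" using False Suc.prems by auto
      then show "hd g \<in> ?A" by (cases g) auto
    qed
    have "sum (path_prob p ?c) B = (\<Sum>a\<in>?A. \<Sum>g\<in>{g. a # g \<in> B}. path_prob p ?c (a # g))"
      by (rule split_first[OF finB False hd]) auto
    also have "\<dots> = (\<Sum>a\<in>?A. p ?c (snd a) (fst a) * (\<Sum>g\<in>{g. a # g \<in> B}. path_prob p (snd a) g))"
      by (rule sum.cong[OF refl]) (auto simp: sum_distrib_left)
    also have "\<dots> \<le> (\<Sum>a\<in>?A. p ?c (snd a) (fst a) * H (pushS r s a))"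
    proof (rule sum_mono)
      fix a assume a: "a \<in> ?A"
      obtain t b where ab: "a = (t, b)" by (cases a)
      have pa: "0 \<le> p ?c (snd a) (fst a)" using p_pos[of ?c b t] a ab cS by auto
      have rs: "redS N r (pushS r s a)" using red_push[OF Suc.prems(1)] a ab by auto
      have ts: "tgtS r (pushS r s a) = snd a" using ab by simp
      have "(\<Sum>g\<in>{g. a # g \<in> B}. path_prob p (tgtS r (pushS r s a)) g) \<le> H (pushS r s a)"
      proof (rule Suc.IH[OF rs])
        show "\<forall>g\<in>{g. a # g \<in> B}. valid_word N (tgtS r (pushS r s a)) g \<and> length g < M \<and>
               foldl (pushS r) (pushS r s a) g = []"
          using Suc.prems(2) ab by auto
        show "pfree {g. a # g \<in> B}" using Suc.prems(3) unfolding pfree_def by auto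
      qed
      then show "p ?c (snd a) (fst a) * (\<Sum>g\<in>{g. a # g \<in> B}. path_prob p (snd a) g) \<le> p ?c (snd a) (fst a) * H (pushS r s a)"
        using pa ts by (simp add: mult_left_mono)
    qed
    also have "\<dots> \<le> H s" using Hs[OF Suc.prems(1) sne] .
    finally show ?thesis .
  qed
qed

lemma partial_le:
  fixes H :: "gen list \<Rightarrow> real"
  assumes H0: "\<And>s. redS N j s \<Longrightarrow> 0 \<le> H s" and H1: "H [] = 1"
    and Hs: "\<And>s. redS N j s \<Longrightarrow> s \<noteq> [] \<Longrightarrow>
       (\<Sum>a\<in>{-1,1} \<times> ({1..N} - {tgtS j s}). p (tgtS j s) (snd a) (fst a) * H (pushS j s a)) \<le> H s"
    and i: "i \<in> {1..N}" and j: "j \<in> {1..N}" and ij: "i \<noteq> j" and k: "k \<in> {-1, 1::int}"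
  shows "(\<Sum>n<M. hit_prob p N i [(k, j)] n) \<le> H [(k, i)]"
proof -
  let ?F = "first_hit_paths N i [(k, j)]"
  let ?B = "\<Union>n\<in>{..<M}. ?F n"
  have finF: "finite (?F n)" for n
    by (rule finite_subset[OF _ finite_valid[of N i "Suc n"]]) (auto simp: first_hit_paths_def)
  have "(\<Sum>n<M. hit_prob p N i [(k, j)] n) = (\<Sum>n<M. sum (path_prob p i) (?F n))"
    by (simp add: hit_prob_def)
  also have "\<dots> = sum (path_prob p i) ?B"
  proof (rule sum.UNION_disjoint[symmetric])
    show "\<forall>i\<in>{..<M}. finite (?F i)" using finF by blast
    show "\<forall>i\<in>{..<M}. \<forall>ja\<in>{..<M}. i \<noteq> ja \<longrightarrow> ?F i \<inter> ?F ja = {}"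
      by (auto simp: first_hit_paths_def)
  qed simp
  also have "\<dots> \<le> H [(k, i)]"
  proof -
    have r0: "redS N j [(k, i)]" using k i ij by simp
    have t0: "tgtS j [(k, i)] = i" by simp
    have "sum (path_prob p (tgtS j [(k, i)])) ?B \<le> H [(k, i)]"
    proof (rule hit_bound[OF H0 H1 Hs j r0])
      show "\<forall>g\<in>?B. valid_word N (tgtS j [(k, i)]) g \<and> length g < M \<and> foldl (pushS j) [(k, i)] g = []"
      proof
        fix g assume "g \<in> ?B"
        then obtain n where n: "n < M" "g \<in> ?F n" by auto
        then have "word_eq N i g [(k, j)]" "valid_word N i g" "length g = n"
          by (auto simp: first_hit_paths_def)
        moreover have "foldl (pushS j) [(k, i)] g = foldl (pushS j) [(k, i)] [(k, j)]"
          by (rule word_eq_fold[OF r0 t0]) fact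
        ultimately show "valid_word N (tgtS j [(k, i)]) g \<and> length g < M \<and> foldl (pushS j) [(k, i)] g = []"
          using n by simp
      qed
      show "pfree ?B" unfolding pfree_def
      proof (intro allI impI)
        fix g z assume g: "g \<in> ?B" and gz: "g @ z \<in> ?B"
        then obtain n n' where "g \<in> ?F n" "g @ z \<in> ?F n'" by auto
        then have A: "length g = n" "word_eq N i g [(k, j)]" "length (g @ z) = n'"
            "\<forall>m<n'. \<not> word_eq N i (take m (g @ z)) [(k, j)]"
          by (auto simp: first_hit_paths_def)
        show "z = []"
        proof (rule ccontr)
          assume "z \<noteq> []"
          then have "n < n'" using A(1,3) by (cases z) auto
          then show False using A(4)[rule_format, of n] A(1,2) by simp
        qed
      qed
    qed (auto intro: H0 H1 Hs)
    then show ?thesis by simp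
  qed
  finally show ?thesis .
qed

end

fun HH :: "(int \<Rightarrow> nat \<Rightarrow> nat \<Rightarrow> real) \<Rightarrow> nat \<Rightarrow> gen list \<Rightarrow> real" where
  "HH G r [] = 1"
| "HH G r ((t, c) # rest) = G t c (tgtS r rest) * HH G r rest"

context walk
begin

definition supersol :: "(int \<Rightarrow> nat \<Rightarrow> nat \<Rightarrow> real) \<Rightarrow> bool" where
  "supersol G \<longleftrightarrow> (\<forall>t\<in>{-1,1}. \<forall>c\<in>{1..N}. \<forall>e\<in>{1..N}. c \<noteq> e \<longrightarrow>
      0 \<le> G t c e \<and>
      p c e t + (\<Sum>a\<in>{1..N} - {c, e}. p c a t * G t a e)
        + G t c e * (\<Sum>a\<in>{1..N} - {c}. p c a (- t) * G (- t) a c) \<le> G t c e)"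

lemma red_tgt: "r \<in> {1..N} \<Longrightarrow> redS N r s \<Longrightarrow> tgtS r s \<in> {1..N}"
  by (cases s) auto

lemma HH_nonneg: "supersol G \<Longrightarrow> r \<in> {1..N} \<Longrightarrow> redS N r s \<Longrightarrow> 0 \<le> HH G r s"
proof (induction s)
  case (Cons g rest)
  obtain t c where g: "g = (t, c)" by (cases g)
  have "tgtS r rest \<in> {1..N}" using red_tgt Cons.prems g by auto
  then have "0 \<le> G t c (tgtS r rest)" using Cons.prems g unfolding supersol_def by auto
  then show ?case using Cons g by auto
qed simp

lemma sum_T: "t \<in> {-1, 1::int} \<Longrightarrow> (\<Sum>t'\<in>{-1,1}. f t') = f t + f (- t)"
  by (auto simp: add.commute)

lemma HH_super:
  assumes G: "supersol G" and r: "r \<in> {1..N}" and rs: "redS N r s" and sne: "s \<noteq> []"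
  shows "(\<Sum>a\<in>{-1,1} \<times> ({1..N} - {tgtS r s}). p (tgtS r s) (snd a) (fst a) * HH G r (pushS r s a)) \<le> HH G r s"
proof -
  obtain t c rest where s: "s = (t, c) # rest" using sne by (cases s) auto
  let ?e = "tgtS r rest"
  have t: "t \<in> {-1,1}" and c: "c \<in> {1..N}" and ce: "c \<noteq> ?e" and rr: "redS N r rest"
    using rs s by auto
  have e: "?e \<in> {1..N}" using red_tgt[OF r rr] .
  have h0: "0 \<le> HH G r rest" using HH_nonneg[OF G r rr] .
  have Gs: "p c ?e t + (\<Sum>a\<in>{1..N} - {c, ?e}. p c a t * G t a ?e)
        + G t c ?e * (\<Sum>a\<in>{1..N} - {c}. p c a (- t) * G (- t) a c) \<le> G t c ?e"
    using G t c e ce unfolding supersol_def by blast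
  have tt: "(- t) \<noteq> t" using t by auto
  have "(\<Sum>a\<in>{-1,1} \<times> ({1..N} - {tgtS r s}). p (tgtS r s) (snd a) (fst a) * HH G r (pushS r s a))
      = (\<Sum>b\<in>{1..N} - {c}. \<Sum>t'\<in>{-1,1}. p c b t' * HH G r (pushS r s (t', b)))"
    using sum_pairs[where c=c and f="\<lambda>t' b. p c b t' * HH G r (pushS r s (t', b))"] s by simp
  also have "\<dots> = (\<Sum>b\<in>{1..N} - {c}. p c b t * HH G r (pushS r s (t, b)) + p c b (-t) * HH G r (pushS r s (-t, b)))"
    by (rule sum.cong[OF refl], subst sum_T[OF t], simp)
  also have "\<dots> = (\<Sum>b\<in>{1..N} - {c}. p c b t * HH G r (pushS r s (t, b))) + (\<Sum>b\<in>{1..N} - {c}. p c b (-t) * HH G r (pushS r s (-t, b)))"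
    by (rule sum.distrib)
  also have "(\<Sum>b\<in>{1..N} - {c}. p c b t * HH G r (pushS r s (t, b))) = (\<Sum>b\<in>{1..N} - {c}. p c b t * (if b = ?e then 1 else G t b ?e)) * HH G r rest"
    unfolding sum_distrib_right
  proof (rule sum.cong[OF refl])
    fix b show "p c b t * HH G r (pushS r s (t, b)) = p c b t * (if b = ?e then 1 else G t b ?e) * HH G r rest"
      by (cases "b = ?e") (auto simp: s)
  qed
  also have "(\<Sum>b\<in>{1..N} - {c}. p c b t * (if b = ?e then 1 else G t b ?e)) = p c ?e t + (\<Sum>a\<in>{1..N} - {c, ?e}. p c a t * G t a ?e)"
  proof -
    have "?e \<in> {1..N} - {c}" using e ce by auto
    then have "(\<Sum>b\<in>{1..N} - {c}. p c b t * (if b = ?e then 1 else G t b ?e)) = p c ?e t + (\<Sum>b\<in>{1..N} - {c} - {?e}. p c b t * (if b = ?e then 1 else G t b ?e))"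
      by (simp add: sum.remove)
    also have "(\<Sum>b\<in>{1..N} - {c} - {?e}. p c b t * (if b = ?e then 1 else G t b ?e)) = (\<Sum>a\<in>{1..N} - {c, ?e}. p c a t * G t a ?e)"
      by (rule sum.cong) auto
    finally show ?thesis .
  qed
  also have "(\<Sum>b\<in>{1..N} - {c}. p c b (-t) * HH G r (pushS r s (-t, b))) = G t c ?e * (\<Sum>a\<in>{1..N} - {c}. p c a (- t) * G (- t) a c) * HH G r rest"
    using tt by (auto simp: s sum_distrib_right sum_distrib_left intro!: sum.cong)
  finally have "(\<Sum>a\<in>{-1,1} \<times> ({1..N} - {tgtS r s}). p (tgtS r s) (snd a) (fst a) * HH G r (pushS r s a))
     = (p c ?e t + (\<Sum>a\<in>{1..N} - {c, ?e}. p c a t * G t a ?e)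
        + G t c ?e * (\<Sum>a\<in>{1..N} - {c}. p c a (- t) * G (- t) a c)) * HH G r rest"
    by (simp add: algebra_simps)
  also have "\<dots> \<le> G t c ?e * HH G r rest" using Gs h0 by (rule mult_right_mono)
  also have "\<dots> = HH G r s" by (simp add: s)
  finally show ?thesis .
qed

lemma partial_le_G:
  assumes G: "supersol G"
    and i: "i \<in> {1..N}" and j: "j \<in> {1..N}" and ij: "i \<noteq> j" and k: "k \<in> {-1, 1::int}"
  shows "(\<Sum>n<M. hit_prob p N i [(k, j)] n) \<le> G k i j"
proof -
  have "(\<Sum>n<M. hit_prob p N i [(k, j)] n) \<le> HH G j [(k, i)]"
    by (rule partial_le[OF HH_nonneg[OF G j] _ HH_super[OF G j] i j ij k]) auto
  then show ?thesis by simp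
qed

lemma R_lt1:
  assumes G: "supersol G" and G1: "G k i j < 1"
    and i: "i \<in> {1..N}" and j: "j \<in> {1..N}" and ij: "i \<noteq> j" and k: "k \<in> {-1, 1::int}"
  shows "R_gen p N i j k 1 < 1"
proof -
  have nn: "0 \<le> hit_prob p N i [(k, j)] n" for n
    unfolding hit_prob_def
    by (rule sum_nonneg) (auto simp: first_hit_paths_def intro: pp_nonneg[OF i])
  have bd: "(\<Sum>n<M. hit_prob p N i [(k, j)] n * 1 ^ n) \<le> G k i j" for M
    using partial_le_G[OF G i j ij k, of M] by simp
  have sm: "summable (\<lambda>n. hit_prob p N i [(k, j)] n * 1 ^ n)"
    by (rule summableI_nonneg_bounded[OF _ bd]) (simp add: nn)
  have "R_gen p N i j k 1 \<le> G k i j"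
    unfolding R_gen_def by (rule suminf_le_const[OF sm bd])
  then show ?thesis using G1 by simp
qed

end

lemma sum_minus1: "finite A \<Longrightarrow> (\<Sum>x\<in>A - {a}. f x) = (\<Sum>x\<in>A. if x = a then 0 else f x)"
  by (simp add: sum.If_cases Diff_eq Compl_eq)

lemma sum_minus2: "finite A \<Longrightarrow> (\<Sum>x\<in>A - {a, b}. f x) = (\<Sum>x\<in>A. if x = a \<or> x = b then 0 else f x)"
  by (simp add: sum.If_cases Diff_eq Compl_eq)

lemma swap_inner: "(\<Sum>c\<in>A. \<Sum>e\<in>B. \<Sum>j\<in>C. F c e j) = (\<Sum>c\<in>A. \<Sum>j\<in>C. \<Sum>e\<in>B. F c e j)"
  by (rule sum.cong[OF refl]) (rule sum.swap)

lemma swap3: "(\<Sum>c\<in>A. \<Sum>e\<in>B. \<Sum>j\<in>C. F c e j) = (\<Sum>j\<in>C. \<Sum>e\<in>B. \<Sum>c\<in>A. F c e j)"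
proof -
  have "(\<Sum>c\<in>A. \<Sum>e\<in>B. \<Sum>j\<in>C. F c e j) = (\<Sum>c\<in>A. \<Sum>j\<in>C. \<Sum>e\<in>B. F c e j)" by (rule swap_inner)
  also have "\<dots> = (\<Sum>j\<in>C. \<Sum>c\<in>A. \<Sum>e\<in>B. F c e j)" by (rule sum.swap)
  also have "\<dots> = (\<Sum>j\<in>C. \<Sum>e\<in>B. \<Sum>c\<in>A. F c e j)" by (rule swap_inner)
  finally show ?thesis .
qed

lemma partA:
  fixes w P v :: "nat \<Rightarrow> nat \<Rightarrow> real"
  assumes "finite S"
  shows "(\<Sum>c\<in>S. \<Sum>e\<in>S-{c}. w c e * (\<Sum>j\<in>S-{c,e}. P c j * v j e))
       = (\<Sum>j\<in>S. \<Sum>e\<in>S-{j}. (\<Sum>c\<in>S-{j,e}. w c e * P c j) * v j e)"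
proof -
  let ?F = "\<lambda>c e j. if e = c \<or> j = c \<or> j = e then 0 else w c e * P c j * v j e"
  have "(\<Sum>c\<in>S. \<Sum>e\<in>S-{c}. w c e * (\<Sum>j\<in>S-{c,e}. P c j * v j e)) = (\<Sum>c\<in>S. \<Sum>e\<in>S. \<Sum>j\<in>S. ?F c e j)"
  proof (rule sum.cong[OF refl])
    fix c
    show "(\<Sum>e\<in>S-{c}. w c e * (\<Sum>j\<in>S-{c,e}. P c j * v j e)) = (\<Sum>e\<in>S. \<Sum>j\<in>S. ?F c e j)"
      unfolding sum_minus1[OF assms] sum_minus2[OF assms] sum_distrib_left
      by (rule sum.cong[OF refl]) (auto intro!: sum.cong)
  qed
  also have "\<dots> = (\<Sum>j\<in>S. \<Sum>e\<in>S. \<Sum>c\<in>S. ?F c e j)" by (rule swap3)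
  also have "\<dots> = (\<Sum>j\<in>S. \<Sum>e\<in>S-{j}. (\<Sum>c\<in>S-{j,e}. w c e * P c j) * v j e)"
  proof (rule sum.cong[OF refl])
    fix j
    show "(\<Sum>e\<in>S. \<Sum>c\<in>S. ?F c e j) = (\<Sum>e\<in>S-{j}. (\<Sum>c\<in>S-{j,e}. w c e * P c j) * v j e)"
      unfolding sum_minus1[OF assms] sum_minus2[OF assms] sum_distrib_right
      by (rule sum.cong[OF refl]) (auto intro!: sum.cong)
  qed
  finally show ?thesis .
qed

lemma partC:
  fixes w P v :: "nat \<Rightarrow> nat \<Rightarrow> real"
  assumes "finite S"
  shows "(\<Sum>c\<in>S. \<Sum>e\<in>S-{c}. w c e * (\<Sum>j\<in>S-{c}. P c j * v j c))
       = (\<Sum>j\<in>S. \<Sum>e\<in>S-{j}. P e j * (\<Sum>e'\<in>S-{e}. w e e') * v j e)"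
proof -
  let ?F = "\<lambda>c e j. if e = c \<or> j = c then 0 else w c e * P c j * v j c"
  have "(\<Sum>c\<in>S. \<Sum>e\<in>S-{c}. w c e * (\<Sum>j\<in>S-{c}. P c j * v j c)) = (\<Sum>c\<in>S. \<Sum>e\<in>S. \<Sum>j\<in>S. ?F c e j)"
  proof (rule sum.cong[OF refl])
    fix c
    show "(\<Sum>e\<in>S-{c}. w c e * (\<Sum>j\<in>S-{c}. P c j * v j c)) = (\<Sum>e\<in>S. \<Sum>j\<in>S. ?F c e j)"
      unfolding sum_minus1[OF assms] sum_distrib_left
      by (rule sum.cong[OF refl]) (auto intro!: sum.cong)
  qed
  also have "\<dots> = (\<Sum>c\<in>S. \<Sum>j\<in>S. \<Sum>e\<in>S. ?F c e j)" by (rule swap_inner)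
  also have "\<dots> = (\<Sum>j\<in>S. \<Sum>c\<in>S. \<Sum>e\<in>S. ?F c e j)" by (rule sum.swap)
  also have "\<dots> = (\<Sum>j\<in>S. \<Sum>e\<in>S-{j}. P e j * (\<Sum>e'\<in>S-{e}. w e e') * v j e)"
  proof (rule sum.cong[OF refl])
    fix j
    show "(\<Sum>c\<in>S. \<Sum>e\<in>S. ?F c e j) = (\<Sum>e\<in>S-{j}. P e j * (\<Sum>e'\<in>S-{e}. w e e') * v j e)"
      unfolding sum_minus1[OF assms] sum_distrib_right sum_distrib_left
      by (rule sum.cong[OF refl]) (auto intro!: sum.cong)
  qed
  finally show ?thesis .
qed

context walk
begin

definition sig :: "int \<Rightarrow> nat \<Rightarrow> real" where
  "sig t c = (\<Sum>j\<in>{1..N} - {c}. p c j t)"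

lemma sig_sum: "t \<in> {-1,1} \<Longrightarrow> c \<in> {1..N} \<Longrightarrow> sig t c + sig (-t) c = 1"
  using p_sum[of c] by (auto simp: sig_def sum.distrib)

lemma card_ge3: "card {1..N} \<ge> 3" using N3 by simp

lemma exists_other: "c \<in> {1..N} \<Longrightarrow> e \<in> {1..N} \<Longrightarrow> \<exists>x. x \<in> {1..N} - {c, e}"
proof (rule ccontr)
  assume "c \<in> {1..N}" "e \<in> {1..N}" "\<not> (\<exists>x. x \<in> {1..N} - {c, e})"
  then have "{1..N} \<subseteq> {c, e}" by auto
  then have "card {1..N} \<le> card {c, e}" by (rule card_mono[rotated]) simp
  also have "\<dots> \<le> 2" by (simp add: card_insert_if)
  finally show False using card_ge3 by simp
qed

lemma sig_pos: "t \<in> {-1,1} \<Longrightarrow> c \<in> {1..N} \<Longrightarrow> 0 < sig t c"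
proof -
  assume t: "t \<in> {-1,1}" and c: "c \<in> {1..N}"
  obtain x where x: "x \<in> {1..N} - {c, c}" using exists_other[OF c c] by blast
  have "0 < p c x t" using p_pos[of c x t] x t c by auto
  also have "\<dots> \<le> sig t c" unfolding sig_def
  proof (rule member_le_sum)
    show "x \<in> {1..N} - {c}" using x by auto
    show "\<And>y. y \<in> {1..N} - {c} - {x} \<Longrightarrow> 0 \<le> p c y t"
      using p_pos[of c _ t] t c by fastforce
  qed simp
  finally show ?thesis .
qed

definition Jop :: "(int \<Rightarrow> nat \<Rightarrow> nat \<Rightarrow> real) \<Rightarrow> int \<Rightarrow> nat \<Rightarrow> nat \<Rightarrow> real" where
  "Jop v t c e = (\<Sum>j\<in>{1..N} - {c, e}. p c j t * v t j e) + sig (- t) c * v t c e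
     + (\<Sum>j\<in>{1..N} - {c}. p c j (- t) * v (- t) j c)"

definition SX :: "(int \<Rightarrow> nat \<Rightarrow> nat \<Rightarrow> real) \<Rightarrow> real" where
  "SX F = (\<Sum>t\<in>{-1,1}. \<Sum>c\<in>{1..N}. \<Sum>e\<in>{1..N} - {c}. F t c e)"

definition Lw :: "(int \<Rightarrow> nat \<Rightarrow> nat \<Rightarrow> real) \<Rightarrow> int \<Rightarrow> nat \<Rightarrow> nat \<Rightarrow> real" where
  "Lw w t j e = (\<Sum>c\<in>{1..N} - {j, e}. w t c e * p c j t) + w t j e * sig (- t) j
     + p e j t * (\<Sum>e'\<in>{1..N} - {e}. w (- t) e e')"

lemma SX_add: "SX (\<lambda>t c e. F t c e + G t c e) = SX F + SX G"
  by (simp add: SX_def sum.distrib)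

lemma SX_J: "SX (\<lambda>t c e. w t c e * Jop v t c e) = SX (\<lambda>t j e. Lw w t j e * v t j e)"
proof -
  let ?S = "{1..N}"
  have A: "(\<Sum>c\<in>?S. \<Sum>e\<in>?S-{c}. w t c e * (\<Sum>j\<in>?S-{c,e}. p c j t * v t j e))
       = (\<Sum>j\<in>?S. \<Sum>e\<in>?S-{j}. (\<Sum>c\<in>?S-{j,e}. w t c e * p c j t) * v t j e)" for t
    by (rule partA) simp
  have C: "(\<Sum>c\<in>?S. \<Sum>e\<in>?S-{c}. w t c e * (\<Sum>j\<in>?S-{c}. p c j (-t) * v (-t) j c))
       = (\<Sum>j\<in>?S. \<Sum>e\<in>?S-{j}. p e j (-t) * (\<Sum>e'\<in>?S-{e}. w t e e') * v (-t) j e)" for t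
    by (rule partC) simp
  have C2: "(\<Sum>t\<in>{-1,1::int}. \<Sum>j\<in>?S. \<Sum>e\<in>?S-{j}. p e j (-t) * (\<Sum>e'\<in>?S-{e}. w t e e') * v (-t) j e)
      = (\<Sum>t\<in>{-1,1::int}. \<Sum>j\<in>?S. \<Sum>e\<in>?S-{j}. p e j t * (\<Sum>e'\<in>?S-{e}. w (-t) e e') * v t j e)"
    by (simp add: add.commute)
  have "SX (\<lambda>t c e. w t c e * Jop v t c e) =
     SX (\<lambda>t c e. w t c e * (\<Sum>j\<in>?S - {c, e}. p c j t * v t j e)) + SX (\<lambda>t c e. w t c e * sig (- t) c * v t c e)
     + SX (\<lambda>t c e. w t c e * (\<Sum>j\<in>?S - {c}. p c j (- t) * v (- t) j c))"
    unfolding Jop_def distrib_left SX_add by (simp add: mult.assoc)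
  also have "SX (\<lambda>t c e. w t c e * (\<Sum>j\<in>?S - {c, e}. p c j t * v t j e)) =
      SX (\<lambda>t j e. (\<Sum>c\<in>?S-{j,e}. w t c e * p c j t) * v t j e)"
    unfolding SX_def using A by simp
  also have "SX (\<lambda>t c e. w t c e * (\<Sum>j\<in>?S - {c}. p c j (- t) * v (- t) j c)) =
      SX (\<lambda>t j e. p e j t * (\<Sum>e'\<in>?S-{e}. w (-t) e e') * v t j e)"
    unfolding SX_def using C C2 by simp
  finally show ?thesis
    unfolding Lw_def distrib_right SX_add by (simp add: mult_ac)
qed

lemma balanced_exists:
  assumes rpos: "\<And>x. x \<in> {1..N} \<Longrightarrow> 0 < (r::nat \<Rightarrow> real) x"
  shows "\<exists>f. (\<forall>x\<in>{1..N}. 0 < f x) \<and> (\<forall>e\<in>{1..N}. f e < (\<Sum>x\<in>{1..N} - {e}. f x))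
            \<and> (\<forall>e\<in>{1..N}. f e / r e < (\<Sum>x\<in>{1..N} - {e}. f x / r x))"
proof -
  let ?S = "{1..N}"
  have ne: "?S \<noteq> {}" using N3 by auto
  define a where "a = arg_min_on r ?S"
  have a: "a \<in> ?S" "\<And>y. y \<in> ?S \<Longrightarrow> r a \<le> r y"
    using arg_min_if_finite[of ?S r] arg_min_least[of ?S _ r] ne unfolding a_def by auto
  have ne2: "?S - {a} \<noteq> {}" using exists_other[OF a(1) a(1)] by auto
  define c where "c = arg_min_on r (?S - {a})"
  have c: "c \<in> ?S - {a}" "\<And>y. y \<in> ?S - {a} \<Longrightarrow> r c \<le> r y"
    using arg_min_if_finite[of "?S - {a}" r] arg_min_least[of "?S - {a}" _ r] ne2 unfolding c_def by auto
  define m where "m = r c"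
  define f where "f x = min (r x) m" for x
  have mpos: "0 < m" using rpos c unfolding m_def by auto
  have fpos: "\<forall>x\<in>?S. 0 < f x" using rpos mpos unfolding f_def by auto
  have fle: "f x \<le> m" for x unfolding f_def by simp
  have gle: "f x / r x \<le> 1" if "x \<in> ?S" for x using rpos[OF that] unfolding f_def by simp
  have gpos: "\<forall>x\<in>?S. 0 < f x / r x" using fpos rpos by auto
  have two: "g e < (\<Sum>x\<in>?S - {e}. g x)"
    if e: "e \<in> ?S" and gp: "\<forall>x\<in>?S. 0 < g x" and x1: "x1 \<in> ?S" "x1 \<noteq> e" "g e \<le> g x1"
    for g :: "nat \<Rightarrow> real" and e x1
  proof -
    obtain x2 where x2: "x2 \<in> ?S - {e, x1}" using exists_other[OF e x1(1)] by blast
    have x2S: "x2 \<in> ?S" "x2 \<noteq> e" "x2 \<noteq> x1" using x2 by auto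
    have "0 < g x2" using gp x2S(1) by blast
    then have "g e < g x1 + g x2" using x1(3) by linarith
    also have "\<dots> = (\<Sum>x\<in>{x1, x2}. g x)" using x2S(3) by simp
    also have "\<dots> \<le> (\<Sum>x\<in>?S - {e}. g x)"
    proof (rule sum_mono2)
      show "{x1, x2} \<subseteq> ?S - {e}" using x1 x2S by blast
      show "\<And>b. b \<in> ?S - {e} - {x1, x2} \<Longrightarrow> 0 \<le> g b" using gp by force
    qed simp
    finally show ?thesis .
  qed
  have A: "\<forall>e\<in>?S. f e < (\<Sum>x\<in>?S - {e}. f x)"
  proof
    fix e assume e: "e \<in> ?S"
    obtain x1 where x1: "x1 \<in> ?S - {a}" "x1 \<noteq> e" using exists_other[OF e a(1)] by blast
    have "f x1 = m" using c(2)[OF x1(1)] unfolding f_def m_def by simp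
    then show "f e < (\<Sum>x\<in>?S - {e}. f x)" using two[OF e fpos, of x1] x1 fle by auto
  qed
  have B: "\<forall>e\<in>?S. f e / r e < (\<Sum>x\<in>?S - {e}. f x / r x)"
  proof
    fix e assume e: "e \<in> ?S"
    obtain x1 where x1: "x1 \<in> {a, c}" "x1 \<noteq> e" using c(1) by auto
    have x1S: "x1 \<in> ?S" using x1 a c by auto
    have "r x1 \<le> m" using x1 a(2)[OF c(1)[THEN DiffD1]] unfolding m_def by auto
    then have "f x1 / r x1 = 1" using rpos[OF x1S] unfolding f_def by simp
    then show "f e / r e < (\<Sum>x\<in>?S - {e}. f x / r x)"
      using two[OF e gpos, of x1] x1 x1S gle[OF e] by auto
  qed
  show ?thesis using fpos A B by blast
qed

end

lemma finite_pos_min: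
  assumes "finite A" "\<And>a. a \<in> A \<Longrightarrow> 0 < (g a :: real)"
  shows "\<exists>\<epsilon>>0. \<forall>a\<in>A. \<epsilon> \<le> g a"
proof (cases "A = {}")
  case True then show ?thesis by (intro exI[of _ 1]) auto
next
  case False
  let ?m = "Min (g ` A)"
  have "?m \<in> g ` A" using assms(1) False by simp
  then have "0 < ?m" using assms(2) by auto
  moreover have "\<forall>a\<in>A. ?m \<le> g a" using assms(1) by simp
  ultimately show ?thesis by blast
qed

lemma finite_max:
  assumes "finite A"
  shows "\<exists>M\<ge>1. \<forall>a\<in>A. (g a :: real) \<le> M"
proof -
  let ?M = "Max (insert 1 (g ` A))"
  have "1 \<le> ?M" using assms by simp
  moreover have "\<forall>a\<in>A. g a \<le> ?M" using assms by simp
  ultimately show ?thesis by blast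
qed

context walk
begin

definition XX :: "(int \<times> nat \<times> nat) set" where
  "XX = {(t, c, e). t \<in> {-1,1} \<and> c \<in> {1..N} \<and> e \<in> {1..N} \<and> c \<noteq> e}"

lemma finite_XX: "finite XX"
proof -
  have "XX \<subseteq> {-1,1} \<times> {1..N} \<times> {1..N}" unfolding XX_def by auto
  then show ?thesis by (rule finite_subset) simp
qed

definition nnX :: "(int \<Rightarrow> nat \<Rightarrow> nat \<Rightarrow> real) \<Rightarrow> bool" where
  "nnX v \<longleftrightarrow> (\<forall>t\<in>{-1,1}. \<forall>c\<in>{1..N}. \<forall>e\<in>{1..N}. c \<noteq> e \<longrightarrow> 0 \<le> v t c e)"

lemma p_nn: "c \<in> {1..N} \<Longrightarrow> j \<in> {1..N} - {c} \<Longrightarrow> t \<in> {-1,1} \<Longrightarrow> 0 \<le> p c j t"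
  using p_pos[of c j t] by auto

lemma sig_nn: "t \<in> {-1,1} \<Longrightarrow> c \<in> {1..N} \<Longrightarrow> 0 \<le> sig t c"
  using sig_pos[of t c] by simp

lemma neg_T: "t \<in> {-1,1::int} \<Longrightarrow> - t \<in> {-1,1}" by auto

lemma Jop_nn: "nnX v \<Longrightarrow> nnX (Jop v)"
  unfolding nnX_def
proof (intro ballI impI)
  fix t c e assume v: "\<forall>t\<in>{-1,1}. \<forall>c\<in>{1..N}. \<forall>e\<in>{1..N}. c \<noteq> e \<longrightarrow> 0 \<le> v t c e"
    and t: "t \<in> {-1,1::int}" and c: "c \<in> {1..N}" and e: "e \<in> {1..N}" and ce: "c \<noteq> e"
  have 1: "0 \<le> (\<Sum>j\<in>{1..N} - {c, e}. p c j t * v t j e)"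
    by (rule sum_nonneg) (use v t e p_nn[OF c _ t] in auto)
  have 2: "0 \<le> sig (- t) c * v t c e" using v t c e ce sig_nn[OF neg_T[OF t] c] by auto
  have 3: "0 \<le> (\<Sum>j\<in>{1..N} - {c}. p c j (- t) * v (- t) j c)"
    by (rule sum_nonneg) (use v neg_T[OF t] c p_nn[OF c _ neg_T[OF t]] in auto)
  show "0 \<le> Jop v t c e" unfolding Jop_def using 1 2 3 by linarith
qed

lemma pmin_exists: "\<exists>pm>0. \<forall>c\<in>{1..N}. \<forall>j\<in>{1..N}. \<forall>t\<in>{-1,1}. c \<noteq> j \<longrightarrow> pm \<le> p c j t"
proof -
  let ?A = "{(c, j, t). c \<in> {1..N} \<and> j \<in> {1..N} \<and> t \<in> {-1,1::int} \<and> c \<noteq> j}"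
  let ?g = "\<lambda>(c, j, t). p c j t"
  have fin: "finite ?A"
    by (rule finite_subset[of _ "{1..N} \<times> {1..N} \<times> {-1,1}"]) auto
  have pos: "\<And>a. a \<in> ?A \<Longrightarrow> 0 < ?g a"
  proof -
    fix a assume "a \<in> ?A"
    then obtain c j t where "a = (c, j, t)" "c \<in> {1..N}" "j \<in> {1..N}" "t \<in> {-1,1::int}" "c \<noteq> j" by auto
    then show "0 < ?g a" using p_pos[of c j t] by simp
  qed
  obtain \<epsilon> where e: "\<epsilon> > 0" "\<forall>a\<in>?A. \<epsilon> \<le> ?g a"
    using finite_pos_min[OF fin pos] by meson
  show ?thesis
  proof (intro exI[of _ \<epsilon>] conjI ballI impI)
    fix c j t assume "c \<in> {1..N}" "j \<in> {1..N}" "t \<in> {-1,1::int}" "c \<noteq> j"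
    then have "(c, j, t) \<in> ?A" by simp
    then have "\<epsilon> \<le> ?g (c, j, t)" using e(2) by blast
    then show "\<epsilon> \<le> p c j t" by simp
  qed (rule e(1))
qed

end

lemma chain3:
  fixes m y z1 z2 x :: real
  assumes "0 \<le> m" "m * y \<le> z2" "m * z2 \<le> z1" "m * z1 \<le> x"
  shows "m ^ 3 * y \<le> x"
proof -
  have "m ^ 3 * y = m * (m * (m * y))" by (simp add: power3_eq_cube mult_ac)
  also have "\<dots> \<le> m * (m * z2)" using assms by (simp add: mult_left_mono)
  also have "\<dots> \<le> m * z1" using assms by (simp add: mult_left_mono)
  also have "\<dots> \<le> x" using assms by simp
  finally show ?thesis .
qed

context walk
begin

definition pmin :: real where
  "pmin = (SOME pm. pm > 0 \<and> (\<forall>c\<in>{1..N}. \<forall>j\<in>{1..N}. \<forall>t\<in>{-1,1}. c \<noteq> j \<longrightarrow> pm \<le> p c j t))"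

lemma pmin: "pmin > 0" "\<And>c j t. c \<in> {1..N} \<Longrightarrow> j \<in> {1..N} \<Longrightarrow> t \<in> {-1,1} \<Longrightarrow> c \<noteq> j \<Longrightarrow> pmin \<le> p c j t"
proof -
  have "pmin > 0 \<and> (\<forall>c\<in>{1..N}. \<forall>j\<in>{1..N}. \<forall>t\<in>{-1,1}. c \<noteq> j \<longrightarrow> pmin \<le> p c j t)"
    unfolding pmin_def by (rule someI_ex) (rule pmin_exists)
  then show "pmin > 0" "\<And>c j t. c \<in> {1..N} \<Longrightarrow> j \<in> {1..N} \<Longrightarrow> t \<in> {-1,1} \<Longrightarrow> c \<noteq> j \<Longrightarrow> pmin \<le> p c j t"
    by auto
qed

lemma Jop_parts:
  assumes v: "nnX v" and t: "t \<in> {-1,1}" and c: "c \<in> {1..N}" and e: "e \<in> {1..N}" and ce: "c \<noteq> e"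
  shows "0 \<le> (\<Sum>j\<in>{1..N} - {c, e}. p c j t * v t j e)"
    "0 \<le> sig (- t) c * v t c e"
    "0 \<le> (\<Sum>j\<in>{1..N} - {c}. p c j (- t) * v (- t) j c)"
proof -
  show "0 \<le> (\<Sum>j\<in>{1..N} - {c, e}. p c j t * v t j e)"
    by (rule sum_nonneg) (use v t e p_nn[OF c _ t] in \<open>auto simp: nnX_def\<close>)
  show "0 \<le> sig (- t) c * v t c e" using v t c e ce sig_nn[OF neg_T[OF t] c] by (auto simp: nnX_def)
  show "0 \<le> (\<Sum>j\<in>{1..N} - {c}. p c j (- t) * v (- t) j c)"
    by (rule sum_nonneg) (use v neg_T[OF t] c p_nn[OF c _ neg_T[OF t]] in \<open>auto simp: nnX_def\<close>)
qed

lemma edge_self: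
  assumes v: "nnX v" and t: "t \<in> {-1,1}" and c: "c \<in> {1..N}" and e: "e \<in> {1..N}" and ce: "c \<noteq> e"
  shows "pmin * v t c e \<le> Jop v t c e"
proof -
  obtain x where x: "x \<in> {1..N} - {c, c}" using exists_other[OF c c] by blast
  have "pmin \<le> p c x (-t)" using pmin(2)[of c x "-t"] x c neg_T[OF t] by auto
  also have "\<dots> \<le> sig (-t) c" unfolding sig_def
  proof (rule member_le_sum)
    show "x \<in> {1..N} - {c}" using x by auto
    show "\<And>y. y \<in> {1..N} - {c} - {x} \<Longrightarrow> 0 \<le> p c y (-t)"
      using p_nn[OF c _ neg_T[OF t]] by blast
  qed simp
  finally have "pmin * v t c e \<le> sig (- t) c * v t c e"
    using v t c e ce by (intro mult_right_mono) (auto simp: nnX_def)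
  then show ?thesis unfolding Jop_def using Jop_parts[OF assms] by linarith
qed

lemma edge_side:
  assumes v: "nnX v" and t: "t \<in> {-1,1}" and c: "c \<in> {1..N}" and e: "e \<in> {1..N}" and ce: "c \<noteq> e"
    and j: "j \<in> {1..N}" "j \<noteq> c" "j \<noteq> e"
  shows "pmin * v t j e \<le> Jop v t c e"
proof -
  have "pmin * v t j e \<le> p c j t * v t j e"
    using v t j e pmin(2)[of c j t] c by (intro mult_right_mono) (auto simp: nnX_def)
  also have "\<dots> \<le> (\<Sum>j\<in>{1..N} - {c, e}. p c j t * v t j e)"
  proof (rule member_le_sum[of j _ "\<lambda>j. p c j t * v t j e"])
    show "j \<in> {1..N} - {c, e}" using j by auto
    show "\<And>y. y \<in> {1..N} - {c, e} - {j} \<Longrightarrow> 0 \<le> p c y t * v t y e"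
      using p_nn[OF c _ t] v t e by (auto simp: nnX_def)
  qed simp
  finally show ?thesis unfolding Jop_def using Jop_parts[OF assms(1-5)] by linarith
qed

lemma edge_down:
  assumes v: "nnX v" and t: "t \<in> {-1,1}" and c: "c \<in> {1..N}" and e: "e \<in> {1..N}" and ce: "c \<noteq> e"
    and j: "j \<in> {1..N}" "j \<noteq> c"
  shows "pmin * v (-t) j c \<le> Jop v t c e"
proof -
  have "pmin * v (-t) j c \<le> p c j (-t) * v (-t) j c"
    using v neg_T[OF t] j c pmin(2)[of c j "-t"] by (intro mult_right_mono) (auto simp: nnX_def)
  also have "\<dots> \<le> (\<Sum>j\<in>{1..N} - {c}. p c j (-t) * v (-t) j c)"
  proof (rule member_le_sum[of j _ "\<lambda>j. p c j (-t) * v (-t) j c"])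
    show "j \<in> {1..N} - {c}" using j by auto
    show "\<And>y. y \<in> {1..N} - {c} - {j} \<Longrightarrow> 0 \<le> p c y (-t) * v (-t) y c"
      using p_nn[OF c _ neg_T[OF t]] v neg_T[OF t] c by (auto simp: nnX_def)
  qed simp
  finally show ?thesis unfolding Jop_def using Jop_parts[OF assms(1-5)] by linarith
qed

lemma path3:
  assumes v: "nnX v" and t: "t \<in> {-1,1}" and c: "c \<in> {1..N}" and e: "e \<in> {1..N}" and ce: "c \<noteq> e"
    and t': "t' \<in> {-1,1}" and c': "c' \<in> {1..N}" and e': "e' \<in> {1..N}" and ce': "c' \<noteq> e'"
  shows "pmin ^ 3 * v t' c' e' \<le> Jop (Jop (Jop v)) t c e"
proof -
  have v1: "nnX (Jop v)" using Jop_nn[OF v] .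
  have v2: "nnX (Jop (Jop v))" using Jop_nn[OF v1] .
  have pm: "0 \<le> pmin" using pmin(1) by simp
  have tt: "t' = t \<or> t' = -t" using t t' by auto
  have mt: "- t \<in> {-1,1}" "- (- t) = t" using t by auto
  show ?thesis
  proof (cases "t' = t")
    case True
    show ?thesis
    proof (cases "e' = c")
      case False
      have "pmin * Jop (Jop v) (-t) e' c \<le> Jop (Jop (Jop v)) t c e"
        by (rule edge_down[OF v2 t c e ce e' False])
      moreover have "pmin * Jop v t c' e' \<le> Jop (Jop v) (-t) e' c"
        using edge_down[OF v1 mt(1) e' c False c' ce'] mt(2) by simp
      moreover have "pmin * v t c' e' \<le> Jop v t c' e'"
        by (rule edge_self[OF v t c' e' ce'])
      ultimately show ?thesis using chain3[OF pm] True by blast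
    next
      case ec: True
      obtain jj where jj: "jj \<in> {1..N}" "jj \<noteq> c" "jj \<noteq> e" using exists_other[OF c e] by blast
      have "pmin * Jop (Jop v) t jj e \<le> Jop (Jop (Jop v)) t c e"
        by (rule edge_side[OF v2 t c e ce jj])
      moreover have "pmin * Jop v (-t) c jj \<le> Jop (Jop v) t jj e"
        using edge_down[OF v1 t jj(1) e jj(3) c jj(2)[symmetric]] .
      moreover have "pmin * v t c' c \<le> Jop v (-t) c jj"
        using edge_down[OF v mt(1) c jj(1) jj(2)[symmetric] c'] ce' ec mt(2) by simp
      ultimately show ?thesis using chain3[OF pm] True ec by blast
    qed
  next
    case False
    then have tn: "t' = -t" using tt by simp
    show ?thesis
    proof (cases "e' = e")
      case False
      have s1: "pmin * Jop (Jop v) t e' e \<le> Jop (Jop (Jop v)) t c e"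
      proof (cases "e' = c")
        case True then show ?thesis using edge_self[OF v2 t c e ce] by simp
      next
        case False then show ?thesis using edge_side[OF v2 t c e ce e'] \<open>e' \<noteq> e\<close> by simp
      qed
      moreover have "pmin * Jop v (-t) c' e' \<le> Jop (Jop v) t e' e"
        using edge_down[OF v1 t e' e \<open>e' \<noteq> e\<close> c' ce'] .
      moreover have "pmin * v (-t) c' e' \<le> Jop v (-t) c' e'"
        by (rule edge_self[OF v mt(1) c' e' ce'])
      ultimately show ?thesis using chain3[OF pm] tn by blast
    next
      case ee: True
      obtain jj where jj: "jj \<in> {1..N}" "jj \<noteq> c" "jj \<noteq> e" using exists_other[OF c e] by blast
      have "pmin * Jop (Jop v) (-t) jj c \<le> Jop (Jop (Jop v)) t c e"
        by (rule edge_down[OF v2 t c e ce jj(1,2)])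
      moreover have "pmin * Jop v t e jj \<le> Jop (Jop v) (-t) jj c"
        using edge_down[OF v1 mt(1) jj(1) c jj(2) e jj(3)[symmetric]] mt(2) by simp
      moreover have "pmin * v (-t) c' e \<le> Jop v t e jj"
        using edge_down[OF v t e jj(1) jj(3)[symmetric] c'] ce' ee by simp
      ultimately show ?thesis using chain3[OF pm] tn ee by blast
    qed
  qed
qed

lemma Jop_add: "Jop (\<lambda>t c e. v1 t c e + v2 t c e) t c e = Jop v1 t c e + Jop v2 t c e"
  unfolding Jop_def by (simp add: sum.distrib algebra_simps)

lemma Jop_smult: "Jop (\<lambda>t c e. a * v t c e) t c e = a * Jop v t c e"
  unfolding Jop_def by (simp add: sum_distrib_left algebra_simps)

lemma Jop_zero: "Jop (\<lambda>t c e. 0) t c e = 0"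
  unfolding Jop_def by simp

lemma Jop_sum: "finite A \<Longrightarrow> Jop (\<lambda>t c e. \<Sum>m\<in>A. F m t c e) t c e = (\<Sum>m\<in>A. Jop (F m) t c e)"
proof (induction A rule: finite_induct)
  case empty then show ?case by (simp add: Jop_zero)
next
  case (insert x A)
  have "Jop (\<lambda>t c e. \<Sum>m\<in>insert x A. F m t c e) t c e = Jop (\<lambda>t c e. F x t c e + (\<Sum>m\<in>A. F m t c e)) t c e"
    using insert by simp
  also have "\<dots> = Jop (F x) t c e + Jop (\<lambda>t c e. \<Sum>m\<in>A. F m t c e) t c e"
    by (rule Jop_add)
  finally show ?case using insert by simp
qed

end

locale walk_lam = walk +
  fixes lam :: "int \<Rightarrow> nat \<Rightarrow> real"
  assumes lam_pos: "\<And>t c. t \<in> {-1,1} \<Longrightarrow> c \<in> {1..N} \<Longrightarrow> 0 < lam t c"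
    and lam_stat: "\<And>t j. t \<in> {-1,1} \<Longrightarrow> j \<in> {1..N} \<Longrightarrow>
        (\<Sum>c\<in>{1..N} - {j}. lam t c * p c j t) = lam t j * sig t j"
begin

lemma Y_exists: "\<exists>Y. (\<forall>t\<in>{-1,1}. \<forall>x\<in>{1..N}. 0 < Y t x) \<and>
   (\<forall>t\<in>{-1,1}. \<forall>e\<in>{1..N}. lam t e * Y (-t) e < lam (-t) e * (\<Sum>x\<in>{1..N} - {e}. Y t x))"
proof -
  define r where "r x = lam 1 x / lam (-1) x" for x
  have rpos: "\<And>x. x \<in> {1..N} \<Longrightarrow> 0 < r x" unfolding r_def using lam_pos by simp
  obtain f where f: "\<forall>x\<in>{1..N}. 0 < f x" "\<forall>e\<in>{1..N}. f e < (\<Sum>x\<in>{1..N} - {e}. f x)"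
      "\<forall>e\<in>{1..N}. f e / r e < (\<Sum>x\<in>{1..N} - {e}. f x / r x)"
    using balanced_exists[of r, OF rpos] by meson
  define Y where "Y t x = (if t = 1 then f x else f x / r x)" for t :: int and x
  show ?thesis
  proof (intro exI[of _ Y] conjI ballI)
    fix t :: int and x assume "t \<in> {-1,1}" "x \<in> {1..N}"
    then show "0 < Y t x" unfolding Y_def using f(1) rpos by auto
  next
    fix t :: int and e assume t: "t \<in> {-1,1}" and e: "e \<in> {1..N}"
    have l1: "0 < lam 1 e" and l2: "0 < lam (-1) e" using lam_pos e by auto
    have re: "lam 1 e * (f e / r e) = lam (-1) e * f e" unfolding r_def using l1 l2 by simp
    show "lam t e * Y (-t) e < lam (-t) e * (\<Sum>x\<in>{1..N} - {e}. Y t x)"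
    proof (cases "t = 1")
      case True
      have "lam t e * Y (-t) e = lam (-1) e * f e" using True re by (simp add: Y_def)
      also have "\<dots> < lam (-1) e * (\<Sum>x\<in>{1..N} - {e}. f x)" using mult_strict_left_mono[OF f(2)[rule_format, OF e] l2] .
      also have "\<dots> = lam (-t) e * (\<Sum>x\<in>{1..N} - {e}. Y t x)" using True by (simp add: Y_def)
      finally show ?thesis .
    next
      case False
      then have tm: "t = -1" using t by auto
      have "lam t e * Y (-t) e = lam 1 e * (f e / r e)" using tm re by (simp add: Y_def)
      also have "\<dots> < lam 1 e * (\<Sum>x\<in>{1..N} - {e}. f x / r x)" using mult_strict_left_mono[OF f(3)[rule_format, OF e] l1] .
      also have "\<dots> = lam (-t) e * (\<Sum>x\<in>{1..N} - {e}. Y t x)" using tm by (simp add: Y_def)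
      finally show ?thesis .
    qed
  qed
qed

definition Yf :: "int \<Rightarrow> nat \<Rightarrow> real" where
  "Yf = (SOME Y. (\<forall>t\<in>{-1,1}. \<forall>x\<in>{1..N}. 0 < Y t x) \<and>
   (\<forall>t\<in>{-1,1}. \<forall>e\<in>{1..N}. lam t e * Y (-t) e < lam (-t) e * (\<Sum>x\<in>{1..N} - {e}. Y t x)))"

lemma Yf: "\<And>t x. t \<in> {-1,1} \<Longrightarrow> x \<in> {1..N} \<Longrightarrow> 0 < Yf t x"
  "\<And>t e. t \<in> {-1,1} \<Longrightarrow> e \<in> {1..N} \<Longrightarrow> lam t e * Yf (-t) e < lam (-t) e * (\<Sum>x\<in>{1..N} - {e}. Yf t x)"
proof -
  have "(\<forall>t\<in>{-1,1}. \<forall>x\<in>{1..N}. 0 < Yf t x) \<and>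
   (\<forall>t\<in>{-1,1}. \<forall>e\<in>{1..N}. lam t e * Yf (-t) e < lam (-t) e * (\<Sum>x\<in>{1..N} - {e}. Yf t x))"
    unfolding Yf_def by (rule someI_ex[OF Y_exists])
  then show "\<And>t x. t \<in> {-1,1} \<Longrightarrow> x \<in> {1..N} \<Longrightarrow> 0 < Yf t x"
    "\<And>t e. t \<in> {-1,1} \<Longrightarrow> e \<in> {1..N} \<Longrightarrow> lam t e * Yf (-t) e < lam (-t) e * (\<Sum>x\<in>{1..N} - {e}. Yf t x)"
    by auto
qed

definition ww :: "int \<Rightarrow> nat \<Rightarrow> nat \<Rightarrow> real" where
  "ww t j e = lam t j * Yf (-t) e"

definition Dg :: "int \<Rightarrow> nat \<Rightarrow> real" where
  "Dg t e = lam (-t) e * (\<Sum>x\<in>{1..N} - {e}. Yf t x) - lam t e * Yf (-t) e"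

lemma ww_pos: "t \<in> {-1,1} \<Longrightarrow> j \<in> {1..N} \<Longrightarrow> e \<in> {1..N} \<Longrightarrow> 0 < ww t j e"
  unfolding ww_def using lam_pos Yf(1) neg_T by simp

lemma Dg_pos: "t \<in> {-1,1} \<Longrightarrow> e \<in> {1..N} \<Longrightarrow> 0 < Dg t e"
  unfolding Dg_def using Yf(2) by simp

lemma Lw_eq:
  assumes t: "t \<in> {-1,1}" and j: "j \<in> {1..N}" and e: "e \<in> {1..N}" and je: "j \<noteq> e"
  shows "Lw ww t j e = ww t j e + p e j t * Dg t e"
proof -
  have mt: "- (- t) = t" by simp
  have s1: "(\<Sum>c\<in>{1..N} - {j}. lam t c * p c j t) = lam t e * p e j t + (\<Sum>c\<in>{1..N} - {j} - {e}. lam t c * p c j t)"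
    using e je by (intro sum.remove) auto
  have s2: "{1..N} - {j} - {e} = {1..N} - {j, e}" by auto
  have A: "(\<Sum>c\<in>{1..N} - {j, e}. ww t c e * p c j t) = Yf (-t) e * (lam t j * sig t j - lam t e * p e j t)"
    using lam_stat[OF t j] s1 s2 unfolding ww_def by (simp add: sum_distrib_left mult_ac)
  have C: "(\<Sum>e'\<in>{1..N} - {e}. ww (- t) e e') = lam (-t) e * (\<Sum>x\<in>{1..N} - {e}. Yf t x)"
    unfolding ww_def by (simp add: sum_distrib_left)
  have ss: "sig t j + sig (-t) j = 1" using sig_sum[OF t j] .
  have "Lw ww t j e = Yf (-t) e * (lam t j * sig t j - lam t e * p e j t) + lam t j * Yf (-t) e * sig (-t) j
       + p e j t * (lam (-t) e * (\<Sum>x\<in>{1..N} - {e}. Yf t x))"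
    unfolding Lw_def A C by (simp add: ww_def)
  also have "\<dots> = lam t j * Yf (-t) e * (sig t j + sig (-t) j) + p e j t * Dg t e"
    unfolding Dg_def by (simp add: algebra_simps)
  also have "\<dots> = ww t j e + p e j t * Dg t e" using ss by (simp add: ww_def)
  finally show ?thesis .
qed

lemma margin: "\<exists>\<epsilon>>0. \<forall>t\<in>{-1,1}. \<forall>j\<in>{1..N}. \<forall>e\<in>{1..N}. j \<noteq> e \<longrightarrow> (1 + \<epsilon>) * ww t j e \<le> Lw ww t j e"
proof -
  let ?g = "\<lambda>(t, j, e). p e j t * Dg t e / ww t j e"
  have pos: "\<And>a. a \<in> XX \<Longrightarrow> 0 < ?g a"
  proof -
    fix a assume "a \<in> XX"
    then obtain t j e where a: "a = (t, j, e)" "t \<in> {-1,1}" "j \<in> {1..N}" "e \<in> {1..N}" "j \<noteq> e"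
      unfolding XX_def by auto
    have "0 < p e j t" using p_pos[of e j t] a by auto
    then show "0 < ?g a" using a Dg_pos ww_pos by simp
  qed
  obtain \<epsilon> where e: "\<epsilon> > 0" "\<forall>a\<in>XX. \<epsilon> \<le> ?g a"
    using finite_pos_min[OF finite_XX pos] by meson
  show ?thesis
  proof (intro exI[of _ \<epsilon>] conjI ballI impI)
    fix t j e assume t: "t \<in> {-1,1::int}" and j: "j \<in> {1..N}" and ee: "e \<in> {1..N}" and je: "j \<noteq> e"
    then have "(t, j, e) \<in> XX" unfolding XX_def by simp
    then have "\<epsilon> \<le> ?g (t, j, e)" using e(2) by blast
    then have "\<epsilon> \<le> p e j t * Dg t e / ww t j e" by simp
    then have "\<epsilon> * ww t j e \<le> p e j t * Dg t e" using ww_pos[OF t j ee] by (simp add: pos_le_divide_eq)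
    then show "(1 + \<epsilon>) * ww t j e \<le> Lw ww t j e" using Lw_eq[OF t j ee je] by (simp add: algebra_simps)
  qed (rule e(1))
qed

end

context walk
begin

lemma SX_mono: "(\<And>t c e. t \<in> {-1,1} \<Longrightarrow> c \<in> {1..N} \<Longrightarrow> e \<in> {1..N} \<Longrightarrow> c \<noteq> e \<Longrightarrow> F t c e \<le> G t c e)
   \<Longrightarrow> SX F \<le> SX G"
  unfolding SX_def by (intro sum_mono) auto

lemma SX_smult: "SX (\<lambda>t c e. a * F t c e) = a * SX F"
  unfolding SX_def by (simp only: sum_distrib_left)

lemma SX_pos: "(\<And>t c e. t \<in> {-1,1} \<Longrightarrow> c \<in> {1..N} \<Longrightarrow> e \<in> {1..N} \<Longrightarrow> c \<noteq> e \<Longrightarrow> 0 < F t c e)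
   \<Longrightarrow> 0 < SX F"
  unfolding SX_def
proof (intro sum_pos)
  fix c assume "c \<in> {1..N}"
  then show "{1..N} - {c} \<noteq> {}" using exists_other[of c c] by auto
qed (use N3 in auto)

definition VV :: "nat \<Rightarrow> int \<Rightarrow> nat \<Rightarrow> nat \<Rightarrow> real" where
  "VV n = (Jop ^^ n) (\<lambda>t c e. 1)"

lemma VV_Suc: "VV (Suc n) = Jop (VV n)"
  unfolding VV_def by simp

lemma VV_0: "VV 0 t c e = 1"
  unfolding VV_def by simp

lemma VV_nn: "nnX (VV n)"
proof (induction n)
  case 0 then show ?case by (simp add: nnX_def VV_0)
next
  case (Suc n) then show ?case using Jop_nn by (simp add: VV_Suc)
qed

end

context walk_lam
begin

definition eps0 :: real where
  "eps0 = (SOME \<epsilon>. \<epsilon> > 0 \<and> (\<forall>t\<in>{-1,1}. \<forall>j\<in>{1..N}. \<forall>e\<in>{1..N}. j \<noteq> e \<longrightarrow> (1 + \<epsilon>) * ww t j e \<le> Lw ww t j e))"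

lemma eps0: "eps0 > 0" "\<And>t j e. t \<in> {-1,1} \<Longrightarrow> j \<in> {1..N} \<Longrightarrow> e \<in> {1..N} \<Longrightarrow> j \<noteq> e \<Longrightarrow> (1 + eps0) * ww t j e \<le> Lw ww t j e"
proof -
  have "eps0 > 0 \<and> (\<forall>t\<in>{-1,1}. \<forall>j\<in>{1..N}. \<forall>e\<in>{1..N}. j \<noteq> e \<longrightarrow> (1 + eps0) * ww t j e \<le> Lw ww t j e)"
    unfolding eps0_def by (rule someI_ex[OF margin])
  then show "eps0 > 0" "\<And>t j e. t \<in> {-1,1} \<Longrightarrow> j \<in> {1..N} \<Longrightarrow> e \<in> {1..N} \<Longrightarrow> j \<noteq> e \<Longrightarrow> (1 + eps0) * ww t j e \<le> Lw ww t j e"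
    by auto
qed

lemma W_growth:
  assumes v: "nnX v"
  shows "(1 + eps0) * SX (\<lambda>t c e. ww t c e * v t c e) \<le> SX (\<lambda>t c e. ww t c e * Jop v t c e)"
proof -
  have "(1 + eps0) * SX (\<lambda>t c e. ww t c e * v t c e) = SX (\<lambda>t c e. ((1 + eps0) * ww t c e) * v t c e)"
    by (simp add: SX_smult[symmetric] mult.assoc)
  also have "\<dots> \<le> SX (\<lambda>t j e. Lw ww t j e * v t j e)"
  proof (rule SX_mono)
    fix t c e assume "t \<in> {-1,1::int}" "c \<in> {1..N}" "e \<in> {1..N}" "c \<noteq> e"
    then show "(1 + eps0) * ww t c e * v t c e \<le> Lw ww t c e * v t c e"
      using eps0(2) v by (intro mult_right_mono) (auto simp: nnX_def)
  qed
  also have "\<dots> = SX (\<lambda>t c e. ww t c e * Jop v t c e)" by (rule SX_J[symmetric])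
  finally show ?thesis .
qed

abbreviation WV :: "nat \<Rightarrow> real" where
  "WV n \<equiv> SX (\<lambda>t c e. ww t c e * VV n t c e)"

lemma WV_growth: "(1 + eps0) ^ n * WV 0 \<le> WV n"
proof (induction n)
  case 0 then show ?case by simp
next
  case (Suc n)
  have "(1 + eps0) ^ Suc n * WV 0 = (1 + eps0) * ((1 + eps0) ^ n * WV 0)" by simp
  also have "\<dots> \<le> (1 + eps0) * WV n" using Suc eps0(1) by (intro mult_left_mono) auto
  also have "\<dots> \<le> WV (Suc n)" using W_growth[OF VV_nn[of n]] by (simp add: VV_Suc)
  finally show ?case .
qed

lemma WV0_pos: "0 < WV 0"
  by (rule SX_pos) (simp add: VV_0 ww_pos)

lemma VV_lower:
  assumes t: "t \<in> {-1,1}" and c: "c \<in> {1..N}" and e: "e \<in> {1..N}" and ce: "c \<noteq> e"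
  shows "pmin ^ 3 * (1 + eps0) ^ n \<le> VV (n + 3) t c e"
proof -
  let ?z = "VV (n + 3) t c e"
  have V3: "VV (n + 3) = Jop (Jop (Jop (VV n)))"
    by (simp add: VV_Suc numeral_3_eq_3)
  have pm3: "0 < pmin ^ 3" using pmin(1) by simp
  have "WV n \<le> SX (\<lambda>t' c' e'. ww t' c' e' * (?z / pmin ^ 3))"
  proof (rule SX_mono)
    fix t' c' e' assume t': "t' \<in> {-1,1::int}" and c': "c' \<in> {1..N}" and e': "e' \<in> {1..N}" and ce': "c' \<noteq> e'"
    have "pmin ^ 3 * VV n t' c' e' \<le> ?z"
      unfolding V3 by (rule path3[OF VV_nn t c e ce t' c' e' ce'])
    then have "VV n t' c' e' \<le> ?z / pmin ^ 3" using pm3 by (simp add: pos_le_divide_eq mult.commute)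
    then show "ww t' c' e' * VV n t' c' e' \<le> ww t' c' e' * (?z / pmin ^ 3)"
      using ww_pos[OF t' c' e'] by (intro mult_left_mono) auto
  qed
  also have "\<dots> = SX (\<lambda>t' c' e'. (?z / pmin ^ 3) * (ww t' c' e' * VV 0 t' c' e'))"
    by (simp add: VV_0 mult.commute)
  also have "\<dots> = (?z / pmin ^ 3) * WV 0"
    by (rule SX_smult)
  finally have "(1 + eps0) ^ n * WV 0 \<le> (?z / pmin ^ 3) * WV 0"
    using WV_growth[of n] by linarith
  then have "(1 + eps0) ^ n \<le> ?z / pmin ^ 3" by (rule mult_right_le_imp_le[OF _ WV0_pos])
  then show ?thesis using pm3 by (simp add: pos_le_divide_eq mult.commute)
qed

lemma alpha_exists:
  "\<exists>\<alpha> \<theta>. \<theta> > 1 \<and> (\<forall>t\<in>{-1,1}. \<forall>c\<in>{1..N}. \<forall>e\<in>{1..N}. c \<noteq> e \<longrightarrow>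
      1 \<le> \<alpha> t c e \<and> \<theta> * \<alpha> t c e \<le> Jop \<alpha> t c e)"
proof -
  define \<theta> where "\<theta> = 1 + eps0 / 2"
  have th1: "\<theta> > 1" using eps0(1) unfolding \<theta>_def by simp
  define q where "q = (1 + eps0) / \<theta>"
  have q1: "q > 1" using eps0(1) unfolding q_def \<theta>_def by (simp add: field_simps)
  obtain n0 where n0: "\<theta> ^ 3 / pmin ^ 3 < q ^ n0" using real_arch_pow[OF q1] by blast
  have pm3: "0 < pmin ^ 3" using pmin(1) by simp
  have key: "\<theta> ^ (n0 + 3) \<le> pmin ^ 3 * (1 + eps0) ^ n0"
  proof -
    have "\<theta> ^ 3 < pmin ^ 3 * q ^ n0" using n0 pm3 by (simp add: divide_less_eq mult.commute)
    then have "\<theta> ^ 3 * \<theta> ^ n0 \<le> (pmin ^ 3 * q ^ n0) * \<theta> ^ n0" using th1 by (intro mult_right_mono) auto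
    also have "\<dots> = pmin ^ 3 * (q ^ n0 * \<theta> ^ n0)" by (simp add: mult.assoc)
    also have "q ^ n0 * \<theta> ^ n0 = (1 + eps0) ^ n0" using th1 unfolding q_def by (simp add: power_mult_distrib[symmetric])
    finally have "\<theta> ^ 3 * \<theta> ^ n0 \<le> pmin ^ 3 * (1 + eps0) ^ n0" .
    then show ?thesis by (simp add: power_add mult.commute)
  qed
  define K where "K = n0 + 1"
  define \<alpha> where "\<alpha> t c e = (\<Sum>m\<le>Suc K. (1 / \<theta> ^ m) * VV m t c e)" for t c e
  show ?thesis
  proof (intro exI[of _ \<alpha>] exI[of _ \<theta>] conjI th1 ballI impI)
    fix t c e assume t: "t \<in> {-1,1::int}" and c: "c \<in> {1..N}" and e: "e \<in> {1..N}" and ce: "c \<noteq> e"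
    have nn: "0 \<le> VV m t c e" for m using VV_nn[of m] t c e ce by (auto simp: nnX_def)
    have a_eq: "\<alpha> t c e = 1 + (\<Sum>m\<le>K. (1 / \<theta> ^ Suc m) * VV (Suc m) t c e)"
      unfolding \<alpha>_def by (subst sum.atMost_Suc_shift) (simp add: VV_0)
    have s_nn: "0 \<le> (\<Sum>m\<le>K. (1 / \<theta> ^ Suc m) * VV (Suc m) t c e)"
      using th1 nn by (intro sum_nonneg) auto
    show "1 \<le> \<alpha> t c e" using a_eq s_nn by simp
    have J_eq: "Jop \<alpha> t c e = (\<Sum>m\<le>K. (1 / \<theta> ^ m) * VV (Suc m) t c e) + (1 / \<theta> ^ Suc K) * VV (Suc (Suc K)) t c e"
    proof -
      have "Jop \<alpha> t c e = (\<Sum>m\<le>Suc K. Jop (\<lambda>t c e. (1 / \<theta> ^ m) * VV m t c e) t c e)"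
        unfolding \<alpha>_def by (rule Jop_sum) simp
      also have "\<dots> = (\<Sum>m\<le>Suc K. (1 / \<theta> ^ m) * VV (Suc m) t c e)"
      proof (rule sum.cong[OF refl])
        fix m
        have "Jop (\<lambda>t c e. (1 / \<theta> ^ m) * VV m t c e) t c e = (1 / \<theta> ^ m) * Jop (VV m) t c e"
          by (rule Jop_smult)
        then show "Jop (\<lambda>t c e. (1 / \<theta> ^ m) * VV m t c e) t c e = (1 / \<theta> ^ m) * VV (Suc m) t c e"
          by (simp add: VV_Suc)
      qed
      finally show ?thesis by simp
    qed
    have th_eq: "\<theta> * \<alpha> t c e = \<theta> + (\<Sum>m\<le>K. (1 / \<theta> ^ m) * VV (Suc m) t c e)"
    proof -
      have "\<theta> * (\<Sum>m\<le>K. (1 / \<theta> ^ Suc m) * VV (Suc m) t c e) = (\<Sum>m\<le>K. (1 / \<theta> ^ m) * VV (Suc m) t c e)"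
        unfolding sum_distrib_left using th1 by (intro sum.cong) auto
      then show ?thesis unfolding a_eq by (simp add: distrib_left)
    qed
    have big: "\<theta> ^ Suc (Suc K) \<le> VV (Suc (Suc K)) t c e"
    proof -
      have e1: "Suc (Suc K) = n0 + 3" unfolding K_def by simp
      have "\<theta> ^ (n0 + 3) \<le> VV (n0 + 3) t c e" using key VV_lower[OF t c e ce, of n0] by linarith
      then show ?thesis unfolding e1 .
    qed
    have "\<theta> \<le> (1 / \<theta> ^ Suc K) * VV (Suc (Suc K)) t c e"
    proof -
      have "\<theta> * \<theta> ^ Suc K \<le> VV (Suc (Suc K)) t c e" using big by simp
      then show ?thesis using th1 by (simp add: field_simps)
    qed
    then show "\<theta> * \<alpha> t c e \<le> Jop \<alpha> t c e" unfolding th_eq J_eq by simp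
  qed
qed

end

lemma alg1:
  fixes PE P st s' \<epsilon> Sa ax D :: real
  assumes "PE + P = st" "st + s' = 1"
  shows "PE + (P - \<epsilon> * Sa) + (1 - \<epsilon> * ax) * (s' - \<epsilon> * D) = 1 - \<epsilon> * (Sa + s' * ax + D) + \<epsilon> * ax * (\<epsilon> * D)"
proof -
  have "PE + (P - \<epsilon> * Sa) + (1 - \<epsilon> * ax) * (s' - \<epsilon> * D) = (PE + P) + s' - \<epsilon> * Sa - \<epsilon> * ax * s' - \<epsilon> * D + \<epsilon> * ax * (\<epsilon> * D)"
    by (simp add: algebra_simps)
  then show ?thesis using assms by (simp add: algebra_simps)
qed

lemma alg2:
  fixes \<epsilon> \<theta> ax :: real
  shows "1 - \<epsilon> * (\<theta> * ax) + \<epsilon> * ax * (\<theta> - 1) = 1 - \<epsilon> * ax"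
  by (simp add: algebra_simps)

lemma sum_lin:
  fixes f g :: "nat \<Rightarrow> real"
  shows "(\<Sum>a\<in>A. f a * (1 - \<epsilon> * g a)) = (\<Sum>a\<in>A. f a) - \<epsilon> * (\<Sum>a\<in>A. f a * g a)"
  by (simp add: right_diff_distrib sum_subtractf sum_distrib_left mult_ac)

context walk_lam
begin

lemma G_exists: "\<exists>G. supersol G \<and> (\<forall>t\<in>{-1,1}. \<forall>c\<in>{1..N}. \<forall>e\<in>{1..N}. c \<noteq> e \<longrightarrow> G t c e < 1)"
proof -
  obtain \<alpha> \<theta> where H: "\<theta> > 1 \<and> (\<forall>t\<in>{-1,1}. \<forall>c\<in>{1..N}. \<forall>e\<in>{1..N}. c \<noteq> e \<longrightarrow>
      1 \<le> \<alpha> t c e \<and> \<theta> * \<alpha> t c e \<le> Jop \<alpha> t c e)"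
    using alpha_exists by (elim exE) (rule that)
  have th1: "\<theta> > 1" using H by (rule conjunct1)
  have al: "\<And>t c e. t \<in> {-1,1} \<Longrightarrow> c \<in> {1..N} \<Longrightarrow> e \<in> {1..N} \<Longrightarrow> c \<noteq> e \<Longrightarrow>
      1 \<le> \<alpha> t c e \<and> \<theta> * \<alpha> t c e \<le> Jop \<alpha> t c e"
    using conjunct2[OF H] by blast
  obtain A where HA: "A \<ge> 1 \<and> (\<forall>a\<in>XX. (\<lambda>(t, c, e). \<alpha> t c e) a \<le> A)"
    using finite_max[OF finite_XX, of "\<lambda>(t, c, e). \<alpha> t c e"] by (elim exE) (rule that)
  have A1: "A \<ge> 1" using HA by (rule conjunct1)
  have A: "\<forall>a\<in>XX. (\<lambda>(t, c, e). \<alpha> t c e) a \<le> A" using HA by (rule conjunct2)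
  have Ab: "\<And>t c e. t \<in> {-1,1} \<Longrightarrow> c \<in> {1..N} \<Longrightarrow> e \<in> {1..N} \<Longrightarrow> c \<noteq> e \<Longrightarrow> \<alpha> t c e \<le> A"
  proof -
    fix t c e assume "t \<in> {-1,1::int}" "c \<in> {1..N}" "e \<in> {1..N}" "c \<noteq> e"
    then have "(t, c, e) \<in> XX" unfolding XX_def by simp
    then have "(\<lambda>(t, c, e). \<alpha> t c e) (t, c, e) \<le> A" by (rule bspec[OF A])
    then show "\<alpha> t c e \<le> A" by simp
  qed
  define \<epsilon> where "\<epsilon> = min 1 (\<theta> - 1) / A"
  have ep: "0 < \<epsilon>" unfolding \<epsilon>_def using th1 A1 by simp
  have epA1: "\<epsilon> * A \<le> 1" and epA2: "\<epsilon> * A \<le> \<theta> - 1" unfolding \<epsilon>_def using A1 by auto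
  define G where "G t c e = 1 - \<epsilon> * \<alpha> t c e" for t c e
  show ?thesis
  proof (intro exI[of _ G] conjI ballI impI)
    fix t c e assume t: "t \<in> {-1,1::int}" and c: "c \<in> {1..N}" and e: "e \<in> {1..N}" and ce: "c \<noteq> e"
    have "\<epsilon> * 1 \<le> \<epsilon> * \<alpha> t c e" using al[OF t c e ce] ep by (intro mult_left_mono) auto
    then show "G t c e < 1" unfolding G_def using ep by simp
  next
    show "supersol G" unfolding supersol_def
    proof (intro ballI impI conjI)
      fix t c e assume t: "t \<in> {-1,1::int}" and c: "c \<in> {1..N}" and e: "e \<in> {1..N}" and ce: "c \<noteq> e"
      have mt: "- t \<in> {-1,1}" using t by auto
      let ?ax = "\<alpha> t c e"
      have ax1: "1 \<le> ?ax" and axJ: "\<theta> * ?ax \<le> Jop \<alpha> t c e" using al[OF t c e ce] by auto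
      have axA: "?ax \<le> A" using Ab[OF t c e ce] .
      have "\<epsilon> * ?ax \<le> \<epsilon> * A" using axA ep by simp
      then show "0 \<le> G t c e" unfolding G_def using epA1 by simp
      let ?Sa = "\<Sum>a\<in>{1..N} - {c, e}. p c a t * \<alpha> t a e"
      let ?D = "\<Sum>a\<in>{1..N} - {c}. p c a (- t) * \<alpha> (- t) a c"
      let ?P = "\<Sum>a\<in>{1..N} - {c, e}. p c a t"
      have J: "Jop \<alpha> t c e = ?Sa + sig (- t) c * ?ax + ?D" unfolding Jop_def ..
      have s1: "(\<Sum>a\<in>{1..N} - {c, e}. p c a t * G t a e) = ?P - \<epsilon> * ?Sa"
        unfolding G_def by (rule sum_lin)
      have s2: "(\<Sum>a\<in>{1..N} - {c}. p c a (- t) * G (- t) a c) = sig (- t) c - \<epsilon> * ?D"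
        unfolding G_def sig_def by (rule sum_lin)
      have sP: "p c e t + ?P = sig t c"
      proof -
        have "sig t c = p c e t + (\<Sum>a\<in>{1..N} - {c} - {e}. p c a t)"
          unfolding sig_def using e ce by (intro sum.remove) auto
        also have "{1..N} - {c} - {e} = {1..N} - {c, e}" by auto
        finally show ?thesis by simp
      qed
      have ss: "sig t c + sig (- t) c = 1" using sig_sum[OF t c] .
      have D0: "0 \<le> ?D"
      proof (rule sum_nonneg)
        fix a assume a: "a \<in> {1..N} - {c}"
        have "0 \<le> p c a (- t)" using p_nn[OF c a mt] .
        moreover have "1 \<le> \<alpha> (- t) a c" using al[OF mt _ c] a by auto
        ultimately show "0 \<le> p c a (- t) * \<alpha> (- t) a c" by simp
      qed
      have DA: "?D \<le> A * sig (- t) c"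
      proof -
        have "?D \<le> (\<Sum>a\<in>{1..N} - {c}. p c a (- t) * A)"
        proof (rule sum_mono)
          fix a assume a: "a \<in> {1..N} - {c}"
          then have "\<alpha> (- t) a c \<le> A" using Ab[OF mt _ c] by auto
          then show "p c a (- t) * \<alpha> (- t) a c \<le> p c a (- t) * A"
            using p_nn[OF c a mt] by (rule mult_left_mono)
        qed
        also have "\<dots> = A * sig (- t) c" unfolding sig_def sum_distrib_left by (simp add: mult.commute)
        finally show ?thesis .
      qed
      have sig1: "sig (- t) c \<le> 1" using ss sig_nn[OF t c] by simp
      have epD: "\<epsilon> * ?D \<le> \<theta> - 1"
      proof -
        have "\<epsilon> * ?D \<le> \<epsilon> * (A * sig (- t) c)" using DA ep by simp
        also have "\<dots> \<le> \<epsilon> * A" using sig1 ep A1 sig_nn[OF mt c] by (simp add: mult_left_le)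
        finally show ?thesis using epA2 by simp
      qed
      have "p c e t + (?P - \<epsilon> * ?Sa) + G t c e * (sig (- t) c - \<epsilon> * ?D)
          = 1 - \<epsilon> * (?Sa + sig (- t) c * ?ax + ?D) + \<epsilon> * ?ax * (\<epsilon> * ?D)"
        unfolding G_def by (rule alg1[OF sP ss])
      also have "\<dots> \<le> 1 - \<epsilon> * (\<theta> * ?ax) + \<epsilon> * ?ax * (\<theta> - 1)"
      proof -
        have "\<epsilon> * (\<theta> * ?ax) \<le> \<epsilon> * (?Sa + sig (- t) c * ?ax + ?D)"
          using axJ J ep by simp
        moreover have "\<epsilon> * ?ax * (\<epsilon> * ?D) \<le> \<epsilon> * ?ax * (\<theta> - 1)"
          using epD ep ax1 by (intro mult_left_mono) auto
        ultimately show ?thesis by linarith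
      qed
      also have "\<dots> = G t c e" unfolding G_def by (rule alg2)
      finally show "p c e t + (\<Sum>a\<in>{1..N} - {c, e}. p c a t * G t a e)
        + G t c e * (\<Sum>a\<in>{1..N} - {c}. p c a (- t) * G (- t) a c) \<le> G t c e"
        unfolding s1 s2 .
    qed
  qed
qed

end

lemma stat_vec_exists:
  fixes q :: "nat \<Rightarrow> nat \<Rightarrow> real"
  assumes N1: "N \<ge> 1"
  shows "\<exists>l. (\<exists>c\<in>{1..N}. l c \<noteq> 0) \<and>
     (\<forall>j\<in>{1..N}. (\<Sum>c\<in>{1..N} - {j}. l c * q c j) = l j * (\<Sum>c\<in>{1..N} - {j}. q j c))"
proof -
  define sg where "sg j = (\<Sum>c\<in>{1..N} - {j}. q j c)" for j
  define A :: "real mat" where "A = mat N N (\<lambda>(a, b). if a = b then - sg (a + 1) else q (b + 1) (a + 1))"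
  have Ac: "A \<in> carrier_mat N N" unfolding A_def by simp
  have AT: "transpose_mat A \<in> carrier_mat N N" using Ac by simp
  have reidx: "(\<Sum>a<N. f (a + 1)) = (\<Sum>c\<in>{1..N}. f c)" for f :: "nat \<Rightarrow> real"
  proof -
    have "(\<Sum>c\<in>{1..N}. f c) = (\<Sum>c\<in>Suc ` {..<N}. f c)" by (simp add: image_Suc_lessThan)
    also have "\<dots> = (\<Sum>a<N. f (Suc a))" by (subst sum.reindex) auto
    finally show ?thesis by simp
  qed
  have row_sum: "(\<Sum>a<N. (if a = b then d else g (a + 1))) = (\<Sum>c\<in>{1..N} - {b + 1}. g c) + d"
    if b: "b < N" for b and g :: "nat \<Rightarrow> real" and d
  proof -
    have "(\<Sum>a<N. (if a = b then d else g (a + 1))) = (\<Sum>c\<in>{1..N}. (if c = b + 1 then d else g c))"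
      using reidx[of "\<lambda>c. if c = b + 1 then d else g c"] by simp
    also have "\<dots> = d + (\<Sum>c\<in>{1..N} - {b + 1}. (if c = b + 1 then d else g c))"
      using b by (subst sum.remove[of _ "b + 1"]) auto
    also have "(\<Sum>c\<in>{1..N} - {b + 1}. (if c = b + 1 then d else g c)) = (\<Sum>c\<in>{1..N} - {b + 1}. g c)"
      by (rule sum.cong) auto
    finally show ?thesis by simp
  qed
  have z: "transpose_mat A *\<^sub>v (vec N (\<lambda>_. 1)) = 0\<^sub>v N"
  proof (rule eq_vecI)
    fix b assume b: "b < dim_vec (0\<^sub>v N :: real vec)"
    then have b': "b < N" by simp
    have "(transpose_mat A *\<^sub>v (vec N (\<lambda>_. 1))) $ b = (\<Sum>a<N. A $$ (a, b))"
      using b' Ac by (simp add: scalar_prod_def col_def row_transpose[symmetric] lessThan_atLeast0)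
    also have "\<dots> = (\<Sum>a<N. (if a = b then - sg (b + 1) else q (b + 1) (a + 1)))"
      using b' unfolding A_def by (intro sum.cong) auto
    also have "\<dots> = 0" using row_sum[OF b', of "- sg (b + 1)" "q (b + 1)"] unfolding sg_def by simp
    finally show "(transpose_mat A *\<^sub>v (vec N (\<lambda>_. 1))) $ b = 0\<^sub>v N $ b" using b' by simp
  qed (use AT in simp)
  have nz: "vec N (\<lambda>_. 1) \<noteq> (0\<^sub>v N :: real vec)" if "N > 0"
  proof
    assume "vec N (\<lambda>_. 1) = (0\<^sub>v N :: real vec)"
    then have "(vec N (\<lambda>_. 1) :: real vec) $ 0 = 0\<^sub>v N $ 0" by simp
    then show False using that by simp
  qed
  show ?thesis
  proof (cases "N = 0")
    case True then show ?thesis using N1 by simp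
  next
    case False
    have "\<exists>v. v \<in> carrier_vec N \<and> v \<noteq> 0\<^sub>v N \<and> transpose_mat A *\<^sub>v v = 0\<^sub>v N"
      using z nz False by (intro exI[of _ "vec N (\<lambda>_. 1)"]) auto
    then have "det (transpose_mat A) = 0"
      using det_0_iff_vec_prod_zero_field[OF AT] by simp
    then have "det A = 0" using det_transpose[OF Ac] by simp
    then obtain v where v: "v \<in> carrier_vec N" "v \<noteq> 0\<^sub>v N" "A *\<^sub>v v = 0\<^sub>v N"
      using det_0_iff_vec_prod_zero_field[OF Ac] by auto
    define l where "l c = v $ (c - 1)" for c
    show ?thesis
    proof (intro exI[of _ l] conjI ballI)
      have "\<exists>a<N. v $ a \<noteq> 0"
      proof (rule ccontr)
        assume "\<not> (\<exists>a<N. v $ a \<noteq> 0)"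
        then have "v = 0\<^sub>v N" using v(1) by (intro eq_vecI) auto
        then show False using v(2) by simp
      qed
      then obtain a where a: "a < N" "v $ a \<noteq> 0" by blast
      then show "\<exists>c\<in>{1..N}. l c \<noteq> 0" unfolding l_def by (intro bexI[of _ "a + 1"]) auto
    next
      fix j assume j: "j \<in> {1..N}"
      define b where "b = j - 1"
      have b: "b < N" "j = b + 1" using j unfolding b_def by auto
      have "0 = (A *\<^sub>v v) $ b" using v(3) b by simp
      also have "\<dots> = (\<Sum>a<N. A $$ (b, a) * v $ a)"
        using b Ac v(1) by (simp add: scalar_prod_def lessThan_atLeast0 mult.commute)
      also have "\<dots> = (\<Sum>a<N. (if a = b then - sg (b + 1) * v $ b else q (a + 1) (b + 1) * l (a + 1)))"
        using b unfolding A_def l_def by (intro sum.cong) auto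
      also have "\<dots> = (\<Sum>c\<in>{1..N} - {b + 1}. q c (b + 1) * l c) - sg (b + 1) * v $ b"
        using row_sum[OF b(1), of "- sg (b + 1) * v $ b" "\<lambda>c. q c (b + 1) * l c"] by simp
      finally show "(\<Sum>c\<in>{1..N} - {j}. l c * q c j) = l j * (\<Sum>c\<in>{1..N} - {j}. q j c)"
        using b unfolding l_def sg_def by (simp add: mult.commute)
    qed
  qed
qed

lemma sum_minus1': "finite A \<Longrightarrow> (\<Sum>x\<in>A - {a}. f x) = (\<Sum>x\<in>A. if x = a then 0 else f x)"
  by (simp add: sum.If_cases Diff_eq Compl_eq)

lemma stat_pos_exists:
  fixes q :: "nat \<Rightarrow> nat \<Rightarrow> real"
  assumes N2: "N \<ge> 2" and q: "\<And>c j. c \<in> {1..N} \<Longrightarrow> j \<in> {1..N} \<Longrightarrow> c \<noteq> j \<Longrightarrow> 0 < q c j"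
  shows "\<exists>l. (\<forall>c\<in>{1..N}. 0 < l c) \<and>
     (\<forall>j\<in>{1..N}. (\<Sum>c\<in>{1..N} - {j}. l c * q c j) = l j * (\<Sum>c\<in>{1..N} - {j}. q j c))"
proof -
  let ?S = "{1..N}"
  define sg where "sg j = (\<Sum>c\<in>?S - {j}. q j c)" for j
  have sgpos: "0 < sg j" if j: "j \<in> ?S" for j
  proof -
    obtain x where x: "x \<in> ?S" "x \<noteq> j"
    proof (cases "j = 1")
      case True then show ?thesis using that[of 2] N2 by auto
    next
      case False then show ?thesis using that[of 1] N2 j by auto
    qed
    have "0 < q j x" using q j x by auto
    also have "\<dots> \<le> sg j" unfolding sg_def
    proof (rule member_le_sum)
      show "x \<in> ?S - {j}" using x by auto
      show "\<And>y. y \<in> ?S - {j} - {x} \<Longrightarrow> 0 \<le> q j y" using q j by (metis DiffD1 DiffD2 insertI1 less_le)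
    qed simp
    finally show ?thesis .
  qed
  obtain l0 where l0: "\<exists>c\<in>?S. l0 c \<noteq> 0" "\<forall>j\<in>?S. (\<Sum>c\<in>?S - {j}. l0 c * q c j) = l0 j * sg j"
    using stat_vec_exists[of N q] N2 unfolding sg_def by auto
  obtain l1 c0 where l1: "c0 \<in> ?S" "0 < l1 c0" "\<forall>j\<in>?S. (\<Sum>c\<in>?S - {j}. l1 c * q c j) = l1 j * sg j"
  proof (cases "\<exists>c\<in>?S. 0 < l0 c")
    case True
    then obtain c0 where "c0 \<in> ?S" "0 < l0 c0" by blast
    then show ?thesis using that[of c0 l0] l0(2) by blast
  next
    case False
    then obtain c0 where c0: "c0 \<in> ?S" "l0 c0 < 0" using l0(1) by force
    have "\<forall>j\<in>?S. (\<Sum>c\<in>?S - {j}. (- l0 c) * q c j) = (- l0 j) * sg j"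
      using l0(2) by (simp add: sum_negf)
    then show ?thesis using that[of c0 "\<lambda>c. - l0 c"] c0 by simp
  qed
  define \<nu> where "\<nu> c = max (l1 c) 0" for c
  have nunn: "0 \<le> \<nu> c" for c unfolding \<nu>_def by simp
  have ineq: "\<nu> j * sg j \<le> (\<Sum>c\<in>?S - {j}. \<nu> c * q c j)" if j: "j \<in> ?S" for j
  proof -
    have a: "(\<Sum>c\<in>?S - {j}. l1 c * q c j) \<le> (\<Sum>c\<in>?S - {j}. \<nu> c * q c j)"
    proof (rule sum_mono)
      fix c assume "c \<in> ?S - {j}"
      then have "0 \<le> q c j" using q j by (metis DiffD1 DiffD2 insertI1 less_le)
      then show "l1 c * q c j \<le> \<nu> c * q c j" unfolding \<nu>_def by (intro mult_right_mono) auto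
    qed
    have b: "0 \<le> (\<Sum>c\<in>?S - {j}. \<nu> c * q c j)"
    proof (rule sum_nonneg)
      fix c assume "c \<in> ?S - {j}"
      then have "0 \<le> q c j" using q j by (metis DiffD1 DiffD2 insertI1 less_le)
      then show "0 \<le> \<nu> c * q c j" using nunn by simp
    qed
    show ?thesis
    proof (cases "0 \<le> l1 j")
      case True then show ?thesis using a l1(3) j unfolding \<nu>_def by simp
    next
      case False then show ?thesis using b unfolding \<nu>_def by simp
    qed
  qed
  have swap: "(\<Sum>j\<in>?S. \<Sum>c\<in>?S - {j}. \<nu> c * q c j) = (\<Sum>j\<in>?S. \<nu> j * sg j)"
  proof -
    have "(\<Sum>j\<in>?S. \<Sum>c\<in>?S - {j}. \<nu> c * q c j) = (\<Sum>j\<in>?S. \<Sum>c\<in>?S. if c = j then 0 else \<nu> c * q c j)"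
      by (simp add: sum_minus1')
    also have "\<dots> = (\<Sum>c\<in>?S. \<Sum>j\<in>?S. if c = j then 0 else \<nu> c * q c j)" by (rule sum.swap)
    also have "\<dots> = (\<Sum>c\<in>?S. \<nu> c * sg c)"
    proof (rule sum.cong[OF refl])
      fix c
      have "(\<Sum>j\<in>?S. if c = j then 0 else \<nu> c * q c j) = \<nu> c * (\<Sum>j\<in>?S. if j = c then 0 else q c j)"
        unfolding sum_distrib_left by (rule sum.cong) auto
      also have "(\<Sum>j\<in>?S. if j = c then 0 else q c j) = sg c"
        unfolding sg_def by (rule sum_minus1'[symmetric]) simp
      finally show "(\<Sum>j\<in>?S. if c = j then 0 else \<nu> c * q c j) = \<nu> c * sg c" .
    qed
    finally show ?thesis .
  qed
  have eq: "(\<Sum>c\<in>?S - {j}. \<nu> c * q c j) = \<nu> j * sg j" if j: "j \<in> ?S" for j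
  proof -
    have "(\<Sum>j\<in>?S. (\<Sum>c\<in>?S - {j}. \<nu> c * q c j) - \<nu> j * sg j) = 0"
      using swap by (simp add: sum_subtractf)
    moreover have "\<forall>j\<in>?S. 0 \<le> (\<Sum>c\<in>?S - {j}. \<nu> c * q c j) - \<nu> j * sg j" using ineq by simp
    ultimately have "\<forall>j\<in>?S. (\<Sum>c\<in>?S - {j}. \<nu> c * q c j) - \<nu> j * sg j = 0"
      using sum_nonneg_eq_0_iff[of ?S "\<lambda>j. (\<Sum>c\<in>?S - {j}. \<nu> c * q c j) - \<nu> j * sg j"] by simp
    then show ?thesis using j by simp
  qed
  have pos: "0 < \<nu> j" if j: "j \<in> ?S" for j
  proof (cases "j = c0")
    case True then show ?thesis using l1(2) unfolding \<nu>_def by simp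
  next
    case False
    have "0 < \<nu> c0 * q c0 j" using l1 q[of c0 j] j False unfolding \<nu>_def by simp
    also have "\<dots> \<le> (\<Sum>c\<in>?S - {j}. \<nu> c * q c j)"
    proof (rule member_le_sum[of c0 _ "\<lambda>c. \<nu> c * q c j"])
      show "c0 \<in> ?S - {j}" using l1(1) False by auto
      show "\<And>y. y \<in> ?S - {j} - {c0} \<Longrightarrow> 0 \<le> \<nu> y * q y j"
        using q j nunn by (force intro: mult_nonneg_nonneg)
    qed simp
    also have "\<dots> = \<nu> j * sg j" using eq[OF j] .
    finally have "0 < \<nu> j * sg j" .
    then show ?thesis using sgpos[OF j] nunn[of j] by (simp add: zero_less_mult_iff)
  qed
  show ?thesis using pos eq unfolding sg_def by blast
qed


theorem corollary5p5:
  fixes N :: nat and p :: "nat \<Rightarrow> nat \<Rightarrow> int \<Rightarrow> real"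
  assumes N3: "N \<ge> 3"
    and p_pos: "\<And>i j k. i \<in> {1..N} \<Longrightarrow> j \<in> {1..N} \<Longrightarrow> i \<noteq> j \<Longrightarrow> k \<in> {-1, 1} \<Longrightarrow>
                  0 < p i j k \<and> p i j k < 1"
    and p_sum: "\<And>i. i \<in> {1..N} \<Longrightarrow> (\<Sum>j\<in>{1..N} - {i}. \<Sum>k\<in>{-1, 1}. p i j k) = 1"
    and i: "i \<in> {1..N}" and j: "j \<in> {1..N}" and ij: "i \<noteq> j" and k: "k \<in> {-1, 1::int}"
  shows "R_gen p N i j k 1 < 1"
proof -
  interpret walk N p using N3 p_pos p_sum by unfold_locales
  have ex: "\<exists>l. (\<forall>c\<in>{1..N}. 0 < l c) \<and>
     (\<forall>j\<in>{1..N}. (\<Sum>c\<in>{1..N} - {j}. l c * p c j t) = l j * (\<Sum>c\<in>{1..N} - {j}. p j c t))"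
    if t: "t \<in> {-1, 1::int}" for t
  proof (rule stat_pos_exists)
    show "2 \<le> N" using N3 by simp
    show "\<And>c j. c \<in> {1..N} \<Longrightarrow> j \<in> {1..N} \<Longrightarrow> c \<noteq> j \<Longrightarrow> 0 < p c j t"
      using p_pos t by blast
  qed
  obtain l1 where l1: "\<forall>c\<in>{1..N}. 0 < l1 c"
    "\<forall>j\<in>{1..N}. (\<Sum>c\<in>{1..N} - {j}. l1 c * p c j 1) = l1 j * (\<Sum>c\<in>{1..N} - {j}. p j c 1)"
    using ex[of 1] by auto
  obtain l2 where l2: "\<forall>c\<in>{1..N}. 0 < l2 c"
    "\<forall>j\<in>{1..N}. (\<Sum>c\<in>{1..N} - {j}. l2 c * p c j (-1)) = l2 j * (\<Sum>c\<in>{1..N} - {j}. p j c (-1))"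
    using ex[of "-1"] by auto
  define lam where "lam t = (if t = 1 then l1 else l2)" for t :: int
  interpret walk_lam N p lam
  proof unfold_locales
    fix t c assume "t \<in> {-1, 1::int}" "c \<in> {1..N}"
    then show "0 < lam t c" unfolding lam_def using l1 l2 by auto
  next
    fix t j assume "t \<in> {-1, 1::int}" "j \<in> {1..N}"
    then show "(\<Sum>c\<in>{1..N} - {j}. lam t c * p c j t) = lam t j * sig t j"
      unfolding lam_def sig_def using l1 l2 by auto
  qed
  obtain G where G: "supersol G" "\<forall>t\<in>{-1,1}. \<forall>c\<in>{1..N}. \<forall>e\<in>{1..N}. c \<noteq> e \<longrightarrow> G t c e < 1"
    using G_exists by blast
  have "G k i j < 1" using G(2) k i j ij by blast
  then show ?thesis using R_lt1[OF G(1) _ i j ij k] by blast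
qed

end
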